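(* Let $r$ be a positive integer and $s=(r,r,\ldots,r)$ of length $n$. Then \[ d_n^s(z)=\sum_{\omega\in\mathcal{SW}(n+1,r)}z^{\mathrm{des}(\omega)}. \] Moreover, the local $h$-polynomial of the $r$-th edgewise subdivision of the $n$-simplex $2^{[n+1]}$ equals the local $h^\ast$-polynomial of the $s$-lecture hall simplex $P_n^s$.
   Context: $P_n^s=\{x\in\mathbb{R}^n:0\le x_1/s_1\le\cdots\le x_n/s_n\le1\}$; $d_n^s(z):=\ell^\ast(P_n^s;z)$ where for a lattice $d$-simplex $\Delta=\mathrm{conv}(v^{(0)},\ldots,v^{(d)})\subset\mathbb{R}^n$, $\ell^\ast(\Delta;z)=\sum_{x\in\Pi^\circ_\Delta\cap\mathbb{Z}^{n+1}}z^{x_{n+1}}$, $\Pi^\circ_\Delta=\{\sum_i\lambda_i(v^{(i)},1):0<\lambda_i<1\}$. $\mathcal{SW}(m,r)$ (Smirnoff words) is the set of strings $\omega_0\omega_1\cdots\omega_m$ with $\omega_i\in\{0,\ldots,r-1\}$, $\omega_0=\omega_m=0$, and $\omega_i\ne\omega_{i+1}$ for $0\le i<m$; $\mathrm{des}(\omega)=|\{i:\omega_i>\omega_{i+1}\}|$. The $r$-th edgewise subdivision of $2^{[n+1]}$: its vertices are the points $x\in\mathbb{Z}_{\ge0}^{n+1}$ with $x_1+\cdots+x_{n+1}=r$; with $\varphi(x)=(x_1,x_1+x_2,\ldots,x_1+\cdots+x_{n+1})$, a set $F$ of vertices is a face iff for all $x,y\in F$, $\varphi(x)-\varphi(y)\in\{0,1\}^{n+1}$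 or $\varphi(y)-\varphi(x)\in\{0,1\}^{n+1}$; a face $F$ lies over the face $\bigcup_{x\in F}\mathrm{supp}(x)$ of $2^{[n+1]}$. For a $(d-1)$-dimensional complex $\Omega$, $h(\Omega;z)=\sum_{i=0}^d f_{i-1}z^i(1-z)^{d-i}$; for a subdivision $\Omega$ of $2^V$, $|V|=m$, with restrictions $\Omega_F$ to faces $F\subseteq V$ ($h(\Omega_\emptyset;z)=1$), the local $h$-polynomial is $\ell_V(\Omega_V;z)=\sum_{F\subseteq V}(-1)^{m-|F|}h(\Omega_F;z)$. *)

theory Defs
  imports Main "HOL-Computational_Algebra.Polynomial"
begin

text \<open>Points of R^n are functions nat => real vanishing outside {0..<n}
  (coordinate j here is coordinate j+1 of the paper). The sequence s is
  0-indexed: s j is the paper's s_(j+1).\<close>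

definition lecture_hall_simplex :: "nat \<Rightarrow> (nat \<Rightarrow> nat) \<Rightarrow> (nat \<Rightarrow> real) set" where
  "lecture_hall_simplex n s =
     {x. (\<forall>j\<ge>n. x j = 0) \<and> 0 \<le> x 0 / real (s 0)
        \<and> (\<forall>j. Suc j < n \<longrightarrow> x j / real (s j) \<le> x (Suc j) / real (s (Suc j)))
        \<and> x (n - 1) / real (s (n - 1)) \<le> 1}"

definition vertices_of :: "(nat \<Rightarrow> real) set \<Rightarrow> (nat \<Rightarrow> real) set" where
  "vertices_of P = {v \<in> P. \<not> (\<exists>a\<in>P. \<exists>b\<in>P. a \<noteq> b \<and>
       (\<exists>t::real. 0 < t \<and> t < 1 \<and> v = (\<lambda>j. t * a j + (1 - t) * b j)))}"

text \<open>Lattice points of the open fundamental parallelepiped of the cone over a simplex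
  with vertex set V in R^n: points x in Z^(n+1) (as functions vanishing outside {0..n},
  coordinate n being the height) of the form sum_v lambda_v (v,1) with 0 < lambda_v < 1.\<close>
definition open_par_points :: "nat \<Rightarrow> (nat \<Rightarrow> real) set \<Rightarrow> (nat \<Rightarrow> int) set" where
  "open_par_points n V =
     {x. (\<forall>j>n. x j = 0) \<and>
         (\<exists>c::(nat \<Rightarrow> real) \<Rightarrow> real. (\<forall>v\<in>V. 0 < c v \<and> c v < 1) \<and>
            (\<forall>j<n. real_of_int (x j) = (\<Sum>v\<in>V. c v * v j)) \<and>
            real_of_int (x n) = (\<Sum>v\<in>V. c v))}"

definition local_hstar :: "nat \<Rightarrow> (nat \<Rightarrow> real) set \<Rightarrow> int poly" where
  "local_hstar n \<Delta> = (\<Sum>x\<in>open_par_points n (vertices_of \<Delta>). monom 1 (nat (x n)))"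

definition lecture_hall_d :: "nat \<Rightarrow> (nat \<Rightarrow> nat) \<Rightarrow> int poly" where
  "lecture_hall_d n s = local_hstar n (lecture_hall_simplex n s)"

definition smirnoff_words :: "nat \<Rightarrow> nat \<Rightarrow> nat list set" where
  "smirnoff_words m r = {w. length w = Suc m \<and> (\<forall>i\<le>m. w ! i < r) \<and> w ! 0 = 0 \<and> w ! m = 0
        \<and> (\<forall>i<m. w ! i \<noteq> w ! Suc i)}"

definition des :: "nat list \<Rightarrow> nat" where
  "des w = card {i. Suc i < length w \<and> w ! i > w ! Suc i}"

text \<open>Vertices of the r-th edgewise subdivision of 2^[n+1]; the ground set [n+1] is
  represented as {0..n}, a vertex as a function nat => nat vanishing outside {0..n}.\<close>
definition esd_vertices :: "nat \<Rightarrow> nat \<Rightarrow> (nat \<Rightarrow> nat) set" where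
  "esd_vertices n r = {x. (\<forall>j>n. x j = 0) \<and> (\<Sum>j\<le>n. x j) = r}"

definition esd_phi :: "(nat \<Rightarrow> nat) \<Rightarrow> nat \<Rightarrow> int" where
  "esd_phi x j = (\<Sum>k\<le>j. int (x k))"

definition esd_faces :: "nat \<Rightarrow> nat \<Rightarrow> (nat \<Rightarrow> nat) set set" where
  "esd_faces n r = {F. F \<subseteq> esd_vertices n r \<and>
      (\<forall>x\<in>F. \<forall>y\<in>F. (\<forall>j\<le>n. esd_phi x j - esd_phi y j \<in> {0,1})
                   \<or> (\<forall>j\<le>n. esd_phi y j - esd_phi x j \<in> {0,1}))}"

definition supp_carrier :: "(nat \<Rightarrow> nat) set \<Rightarrow> nat set" where
  "supp_carrier F = (\<Union>x\<in>F. {j. x j \<noteq> 0})"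

definition esd_restrict :: "nat \<Rightarrow> nat \<Rightarrow> nat set \<Rightarrow> (nat \<Rightarrow> nat) set set" where
  "esd_restrict n r G = {F \<in> esd_faces n r. supp_carrier F \<subseteq> G}"

text \<open>h-polynomial of a (d-1)-dimensional complex given by its set of faces
  (including the empty face).\<close>
definition h_poly :: "nat \<Rightarrow> 'a set set \<Rightarrow> int poly" where
  "h_poly d \<Omega> = (\<Sum>i\<le>d. of_nat (card {F\<in>\<Omega>. card F = i}) * monom 1 i * [:1, -1:] ^ (d - i))"

definition local_h :: "nat set \<Rightarrow> (nat set \<Rightarrow> 'a set set) \<Rightarrow> int poly" where
  "local_h V \<Omega> = (\<Sum>G\<in>Pow V. (-1) ^ (card V - card G) * h_poly (card G) (\<Omega> G))"

definition esd_local_h :: "nat \<Rightarrow> nat \<Rightarrow> int poly" where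
  "esd_local_h n r = local_h {0..n} (esd_restrict n r)"

end

theory Submission
  imports Defs "HOL-Library.Multiset" "HOL-Computational_Algebra.Polynomial_FPS"
begin


definition Aset :: "nat \<Rightarrow> nat \<Rightarrow> (nat \<Rightarrow> nat) set" where
  "Aset n r = {a. (\<forall>j>n. a j = 0) \<and> (\<forall>j\<le>n. 0 < a j \<and> a j < r) \<and> r dvd (\<Sum>j\<le>n. a j)}"

lemma div_step:
  fixes s a r :: nat
  assumes "0 < a" "a < r"
  shows "(s + a) div r = s div r + (if (s + a) mod r < s mod r then 1 else 0)"
proof -
  have r: "r > 0" using assms by simp
  obtain q p where s: "s = q * r + p" and p: "p < r"
    using r by (metis mod_less_divisor div_mult_mod_eq)
  show ?thesis
  proof (cases "p + a < r")
    case True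
    then have "(s + a) div r = q" "(s+a) mod r = p + a" "s div r = q" "s mod r = p"
      using s p r by (simp_all add: add.assoc)
    then show ?thesis using assms by simp
  next
    case False
    have e: "s + a = (q+1) * r + (p + a - r)" using s False by simp
    have l: "p + a - r < r" using p assms False by linarith
    have "(s + a) div r = ((q+1)*r + (p+a-r)) div r" "(s + a) mod r = ((q+1)*r + (p+a-r)) mod r"
      by (simp_all only: e)
    then have "(s + a) div r = q + 1" "(s+a) mod r = p + a - r"
      using l r by (simp_all only: div_mult_self3 mod_mult_self3) simp_all
    moreover have "s div r = q" "s mod r = p" using s p r by simp_all
    ultimately show ?thesis using assms False by simp
  qed
qed

lemma mod_back:
  fixes x a r :: nat
  assumes "x < r" "a < r"
  shows "((x + a) mod r + r - x) mod r = a"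
proof (cases "x + a < r")
  case True
  then show ?thesis using assms by simp
next
  case False
  then have "(x + a) mod r = x + a - r" using assms
    using le_mod_geq[of r "x+a"] by simp
  then show ?thesis using assms False by simp
qed

lemma desc_count:
  fixes a :: "nat \<Rightarrow> nat"
  assumes "\<forall>k<m. 0 < a k \<and> a k < r"
  shows "(\<Sum>k<m. a k) div r = card {k. k < m \<and> (\<Sum>i<Suc k. a i) mod r < (\<Sum>i<k. a i) mod r}"
  using assms
proof (induction m)
  case 0
  then show ?case by simp
next
  case (Suc m)
  let ?P = "\<lambda>k. (\<Sum>i<Suc k. a i) mod r < (\<Sum>i<k. a i) mod r"
  have IH: "(\<Sum>k<m. a k) div r = card {k. k < m \<and> ?P k}" using Suc by simp
  have st: "(\<Sum>k<Suc m. a k) div r = (\<Sum>k<m. a k) div r + (if ?P m then 1 else 0)"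
    using div_step[of "a m" r "\<Sum>k<m. a k"] Suc.prems by (simp add: add.commute)
  have fin: "finite {k. k < m \<and> ?P k}" by simp
  show ?case
  proof (cases "?P m")
    case True
    then have "{k. k < Suc m \<and> ?P k} = insert m {k. k < m \<and> ?P k}" by auto
    then show ?thesis using st IH True fin by simp
  next
    case False
    then have "{k. k < Suc m \<and> ?P k} = {k. k < m \<and> ?P k}" using less_Suc_eq by auto
    then show ?thesis using st IH False by simp
  qed
qed

definition word :: "nat \<Rightarrow> nat \<Rightarrow> (nat \<Rightarrow> nat) \<Rightarrow> nat list" where
  "word n r a = map (\<lambda>i. (\<Sum>k<i. a k) mod r) [0..<n+2]"

lemma word_nth: "i < n + 2 \<Longrightarrow> word n r a ! i = (\<Sum>k<i. a k) mod r"
  unfolding word_def by (simp del: upt.simps)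

lemma word_len: "length (word n r a) = n + 2"
  unfolding word_def by simp

lemma Aset_r: "a \<in> Aset n r \<Longrightarrow> r > 0"
  unfolding Aset_def by auto

lemma word_SW:
  assumes a: "a \<in> Aset n r"
  shows "word n r a \<in> smirnoff_words (Suc n) r"
proof -
  have r: "r > 0" using Aset_r a by blast
  have ar: "\<forall>j\<le>n. 0 < a j \<and> a j < r" and dv: "r dvd (\<Sum>j\<le>n. a j)"
    using a unfolding Aset_def by auto
  have "word n r a ! i \<noteq> word n r a ! Suc i" if "i < Suc n" for i
  proof -
    have "(\<Sum>k<Suc i. a k) mod r \<noteq> (\<Sum>k<i. a k) mod r"
    proof
      assume "(\<Sum>k<Suc i. a k) mod r = (\<Sum>k<i. a k) mod r"
      then have "((\<Sum>k<i. a k) + a i) mod r = (\<Sum>k<i. a k) mod r" by (simp add: add.commute)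
      then have "r dvd a i" 
        using mod_eq_dvd_iff_nat[of "\<Sum>k<i. a k" "(\<Sum>k<i. a k) + a i" r] by simp
      then show False using ar that by (meson less_Suc_eq_le nat_dvd_not_less)
    qed
    then show ?thesis using that by (simp add: word_nth)
  qed
  moreover have "word n r a ! Suc n = 0"
    using dv by (simp add: word_nth lessThan_Suc_atMost)
  ultimately show ?thesis unfolding smirnoff_words_def
    using r by (auto simp: word_nth word_len)
qed

lemma des_word:
  assumes a: "a \<in> Aset n r"
  shows "des (word n r a) = (\<Sum>j\<le>n. a j) div r"
proof -
  have ar: "\<forall>j<Suc n. 0 < a j \<and> a j < r"
    using a unfolding Aset_def by auto
  have "{i. Suc i < length (word n r a) \<and> word n r a ! Suc i < word n r a ! i}
      = {k. k < Suc n \<and> (\<Sum>i<Suc k. a i) mod r < (\<Sum>i<k. a i) mod r}"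
    by (auto simp: word_len word_nth simp del: sum.lessThan_Suc)
  then show ?thesis unfolding des_def using desc_count[OF ar]
    by (simp add: lessThan_Suc_atMost)
qed

definition wordinv :: "nat \<Rightarrow> nat \<Rightarrow> nat list \<Rightarrow> nat \<Rightarrow> nat" where
  "wordinv n r w i = (if i \<le> n then (w ! Suc i + r - w ! i) mod r else 0)"

lemma wordinv_word:
  assumes a: "a \<in> Aset n r"
  shows "wordinv n r (word n r a) = a"
proof
  fix i
  have r: "r > 0" using Aset_r a by blast
  show "wordinv n r (word n r a) i = a i"
  proof (cases "i \<le> n")
    case True
    then have ai: "a i < r" using a unfolding Aset_def by auto
    have "wordinv n r (word n r a) i = (((\<Sum>k<i. a k) + a i) mod r + r - (\<Sum>k<i. a k) mod r) mod r"
      using True by (simp add: wordinv_def word_nth add.commute)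
    also have "\<dots> = (((\<Sum>k<i. a k) mod r + a i) mod r + r - (\<Sum>k<i. a k) mod r) mod r"
      by (simp add: mod_add_left_eq)
    also have "\<dots> = a i" using mod_back[of "(\<Sum>k<i. a k) mod r" r "a i"] r ai by simp
    finally show ?thesis .
  next
    case False
    then show ?thesis using a unfolding Aset_def wordinv_def by auto
  qed
qed

lemma SW_props:
  assumes w: "w \<in> smirnoff_words (Suc n) r"
  shows "length w = n + 2" "\<And>i. i \<le> Suc n \<Longrightarrow> w ! i < r" "w ! 0 = 0" "w ! Suc n = 0"
    "\<And>i. i \<le> n \<Longrightarrow> w ! i \<noteq> w ! Suc i"
  using w unfolding smirnoff_words_def by auto

lemma wordinv_prefix:
  assumes w: "w \<in> smirnoff_words (Suc n) r"
  shows "i \<le> Suc n \<Longrightarrow> (\<Sum>k<i. wordinv n r w k) mod r = w ! i"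
proof (induction i)
  case 0
  then show ?case using SW_props(3)[OF w] by simp
next
  case (Suc i)
  have r: "r > 0" using SW_props(2)[OF w, of 0] by simp
  have i: "i \<le> n" using Suc.prems by simp
  have "(\<Sum>k<Suc i. wordinv n r w k) mod r = ((\<Sum>k<i. wordinv n r w k) + wordinv n r w i) mod r"
    by simp
  also have "\<dots> = ((\<Sum>k<i. wordinv n r w k) mod r + wordinv n r w i) mod r"
    by (simp add: mod_add_left_eq)
  also have "\<dots> = (w ! i + (w ! Suc i + r - w ! i) mod r) mod r"
    using Suc i by (simp add: wordinv_def)
  also have "\<dots> = (w ! i + (w ! Suc i + r - w ! i)) mod r"
    by (simp add: mod_add_right_eq)
  also have "\<dots> = (w ! Suc i + r) mod r"
    using SW_props(2)[OF w, of i] i by simp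
  also have "\<dots> = w ! Suc i" using SW_props(2)[OF w, of "Suc i"] i by simp
  finally show ?case .
qed

lemma wordinv_Aset:
  assumes w: "w \<in> smirnoff_words (Suc n) r"
  shows "wordinv n r w \<in> Aset n r"
proof -
  have r: "r > 0" using SW_props(2)[OF w, of 0] by simp
  have pos: "0 < wordinv n r w j \<and> wordinv n r w j < r" if j: "j \<le> n" for j
  proof -
    have lt: "w ! j < r" "w ! Suc j < r" using SW_props(2)[OF w] j by auto
    have ne: "w ! j \<noteq> w ! Suc j" using SW_props(5)[OF w] j by auto
    have "(w ! Suc j + r - w ! j) mod r \<noteq> 0"
    proof
      assume "(w ! Suc j + r - w ! j) mod r = 0"
      then have "r dvd (w ! Suc j + r - w ! j)" by auto
      moreover have "0 < w ! Suc j + r - w ! j" "w ! Suc j + r - w ! j < 2 * r"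
        "w ! Suc j + r - w ! j \<noteq> r" using lt ne by auto
      ultimately obtain k where k: "w ! Suc j + r - w ! j = r * k" "0 < r * k" "r * k < 2 * r" "r * k \<noteq> r"
        by (metis dvdE)
      then have "0 < k" "k < 2" using r by auto
      then have "k = 1" by simp
      then show False using k by simp
    qed
    then show ?thesis using j r by (simp add: wordinv_def)
  qed
  have "(\<Sum>k<Suc n. wordinv n r w k) mod r = 0"
    using wordinv_prefix[OF w, of "Suc n"] SW_props(4)[OF w] by simp
  then have "r dvd (\<Sum>j\<le>n. wordinv n r w j)" by (simp add: lessThan_Suc_atMost dvd_eq_mod_eq_0)
  then show ?thesis unfolding Aset_def using pos by (auto simp: wordinv_def)
qed

lemma word_wordinv:
  assumes w: "w \<in> smirnoff_words (Suc n) r"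
  shows "word n r (wordinv n r w) = w"
proof (rule nth_equalityI)
  show "length (word n r (wordinv n r w)) = length w" using SW_props(1)[OF w] word_len by simp
  fix i assume "i < length (word n r (wordinv n r w))"
  then have i: "i < n + 2" by (simp add: word_len)
  then show "word n r (wordinv n r w) ! i = w ! i"
    using wordinv_prefix[OF w, of i] by (simp add: word_nth)
qed

lemma bij_word: "bij_betw (word n r) (Aset n r) (smirnoff_words (Suc n) r)"
  by (rule bij_betw_byWitness[where f'="wordinv n r"])
     (auto simp: wordinv_word word_wordinv word_SW wordinv_Aset)

lemma SW_sum_Aset:
  "(\<Sum>w\<in>smirnoff_words (Suc n) r. monom 1 (des w)) =
   (\<Sum>a\<in>Aset n r. (monom 1 ((\<Sum>j\<le>n. a j) div r) :: int poly))"
proof -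
  have "(\<Sum>w\<in>smirnoff_words (Suc n) r. (monom 1 (des w) :: int poly)) =
        (\<Sum>a\<in>Aset n r. monom 1 (des (word n r a)))"
    using sum.reindex_bij_betw[OF bij_word, of "\<lambda>w. (monom 1 (des w) :: int poly)"] by simp
  also have "\<dots> = (\<Sum>a\<in>Aset n r. monom 1 ((\<Sum>j\<le>n. a j) div r))"
    by (rule sum.cong) (auto simp: des_word)
  finally show ?thesis .
qed


definition uv :: "nat \<Rightarrow> nat \<Rightarrow> nat \<Rightarrow> nat \<Rightarrow> real" where
  "uv n r k = (\<lambda>j. if k \<le> j \<and> j < n then real r else 0)"

lemma P_char:
  assumes r: "r > 0"
  shows "x \<in> lecture_hall_simplex n (\<lambda>_. r) \<longleftrightarrow>
    (\<forall>j\<ge>n. x j = 0) \<and> 0 \<le> x 0 \<and> (\<forall>j. Suc j < n \<longrightarrow> x j \<le> x (Suc j)) \<and> x (n - 1) \<le> real r"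
  using r unfolding lecture_hall_simplex_def
  by (auto simp: divide_right_mono divide_le_cancel zero_le_divide_iff)

lemma P_mono:
  assumes r: "r > 0" and x: "x \<in> lecture_hall_simplex n (\<lambda>_. r)"
  shows "i \<le> j \<Longrightarrow> j < n \<Longrightarrow> x i \<le> x j"
proof (induction j)
  case 0
  then show ?case by simp
next
  case (Suc j)
  show ?case
  proof (cases "i = Suc j")
    case True then show ?thesis by simp
  next
    case False
    then have "x i \<le> x j" using Suc by simp
    also have "x j \<le> x (Suc j)" using x Suc.prems P_char[OF r] by blast
    finally show ?thesis .
  qed
qed

lemma P_bounds:
  assumes r: "r > 0" and x: "x \<in> lecture_hall_simplex n (\<lambda>_. r)" and j: "j < n"
  shows "0 \<le> x j" "x j \<le> real r"
proof -
  have "x 0 \<le> x j" using P_mono[OF r x, of 0 j] j by simp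
  then show "0 \<le> x j" using x P_char[OF r] by auto
  have "x j \<le> x (n - 1)" using P_mono[OF r x, of j "n - 1"] j by simp
  then show "x j \<le> real r" using x P_char[OF r] by auto
qed

lemma uv_in_P:
  assumes r: "r > 0" and n: "n \<ge> 1" and k: "k \<le> n"
  shows "uv n r k \<in> lecture_hall_simplex n (\<lambda>_. r)"
  unfolding P_char[OF r] uv_def using n by auto

lemma conv_extreme:
  fixes t a b c :: real
  assumes "0 < t" "t < 1" "a \<le> c" "b \<le> c" "t * a + (1 - t) * b = c"
  shows "a = c \<and> b = c"
proof -
  have "t * (c - a) \<ge> 0" "(1 - t) * (c - b) \<ge> 0" using assms by auto
  moreover have "t * (c - a) + (1 - t) * (c - b) = 0" using assms(5) by (simp add: algebra_simps)
  ultimately have "t * (c - a) = 0" "(1 - t) * (c - b) = 0" by linarith+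
  then show ?thesis using assms(1,2) by auto
qed

lemma uv_vertex:
  assumes r: "r > 0" and n: "n \<ge> 1" and k: "k \<le> n"
  shows "uv n r k \<in> vertices_of (lecture_hall_simplex n (\<lambda>_. r))"
proof -
  let ?P = "lecture_hall_simplex n (\<lambda>_. r)"
  have "a = b" if a: "a \<in> ?P" and b: "b \<in> ?P" and t: "0 < t" "t < 1"
     and e: "uv n r k = (\<lambda>j. t * a j + (1 - t) * b j)" for a b t
  proof
    fix j
    have ej: "uv n r k j = t * a j + (1 - t) * b j" using e by meson
    show "a j = b j"
    proof (cases "j < n")
      case False
      then show ?thesis using a b P_char[OF r] by auto
    next
      case True
      note bd = P_bounds[OF r a True] P_bounds[OF r b True]
      show ?thesis
      proof (cases "k \<le> j")
        case True
        then have "t * a j + (1 - t) * b j = real r" using ej \<open>j < n\<close> by (simp add: uv_def)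
        then show ?thesis using conv_extreme[OF t, of "a j" "real r" "b j"] bd by auto
      next
        case False
        then have "t * (- a j) + (1 - t) * (- b j) = 0" using ej by (simp add: uv_def)
        then show ?thesis using conv_extreme[OF t, of "- a j" 0 "- b j"] bd by auto
      qed
    qed
  qed
  then show ?thesis unfolding vertices_of_def using uv_in_P[OF r n k] by blast
qed

lemma vertex_01:
  assumes r: "r > 0" and v: "v \<in> vertices_of (lecture_hall_simplex n (\<lambda>_. r))"
     and j0: "j0 < n"
  shows "v j0 = 0 \<or> v j0 = real r"
proof (rule ccontr)
  let ?P = "lecture_hall_simplex n (\<lambda>_. r)"
  assume "\<not> (v j0 = 0 \<or> v j0 = real r)"
  have vP: "v \<in> ?P" using v unfolding vertices_of_def by blast
  define y where "y = v j0"
  have y: "0 < y" "y < real r" using P_bounds[OF r vP j0] \<open>\<not> _\<close> unfolding y_def by auto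
  define D where "D = insert y (insert (real r - y) ((\<lambda>i. \<bar>v i - y\<bar>) ` {i. i < n \<and> v i \<noteq> y}))"
  have Dfin: "finite D" unfolding D_def by simp
  have Dpos: "\<forall>d\<in>D. d > 0" unfolding D_def using y by auto
  define \<delta> where "\<delta> = Min D"
  have \<delta>pos: "\<delta> > 0" unfolding \<delta>_def using Dfin Dpos by (simp add: D_def)
  have \<delta>le: "\<delta> \<le> d" if "d \<in> D" for d unfolding \<delta>_def using Dfin that by simp
  have \<delta>y: "\<delta> \<le> y" "\<delta> \<le> real r - y" using \<delta>le unfolding D_def by auto
  have \<delta>i: "\<delta> \<le> \<bar>v i - y\<bar>" if "i < n" "v i \<noteq> y" for i
    using \<delta>le that unfolding D_def by auto
  define e where "e = (\<lambda>i. if i < n \<and> v i = y then \<delta> / 2 else 0)"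
  define a where "a = (\<lambda>i. v i + e i)"
  define b where "b = (\<lambda>i. v i - e i)"
  have vP': "(\<forall>j\<ge>n. v j = 0) \<and> 0 \<le> v 0 \<and> (\<forall>j. Suc j < n \<longrightarrow> v j \<le> v (Suc j)) \<and> v (n - 1) \<le> real r"
    using vP P_char[OF r] by blast
  have n0: "0 < n" using j0 by simp
  have aP: "a \<in> ?P" and bP: "b \<in> ?P"
  proof -
    have h1: "\<forall>j\<ge>n. a j = 0" "\<forall>j\<ge>n. b j = 0" using vP' unfolding a_def b_def e_def by auto
    have h2: "0 \<le> a 0" "0 \<le> b 0"
      using vP' \<delta>y \<delta>pos unfolding a_def b_def e_def by auto
    have h3: "a j \<le> a (Suc j) \<and> b j \<le> b (Suc j)" if "Suc j < n" for j
    proof -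
      have le: "v j \<le> v (Suc j)" using vP' that by blast
      consider "v j = y" "v (Suc j) = y" | "v j = y" "v (Suc j) \<noteq> y" | "v j \<noteq> y" "v (Suc j) = y"
        | "v j \<noteq> y" "v (Suc j) \<noteq> y" by blast
      then show ?thesis
      proof cases
        case 1 then show ?thesis using that unfolding a_def b_def e_def by auto
      next
        case 2
        have "\<delta> \<le> \<bar>v (Suc j) - y\<bar>" using \<delta>i[OF that 2(2)] .
        then show ?thesis using 2 le that \<delta>pos unfolding a_def b_def e_def by auto
      next
        case 3
        have "\<delta> \<le> \<bar>v j - y\<bar>" using \<delta>i[of j] that 3 by simp
        then show ?thesis using 3 le that \<delta>pos unfolding a_def b_def e_def by auto
      qed (use le in \<open>auto simp: a_def b_def e_def\<close>)
    qed
    have h4: "a (n - 1) \<le> real r" "b (n - 1) \<le> real r"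
      using vP' \<delta>y \<delta>pos unfolding a_def b_def e_def by auto
    show "a \<in> ?P" unfolding P_char[OF r] using h1 h2 h3 h4 by blast
    show "b \<in> ?P" unfolding P_char[OF r] using h1 h2 h3 h4 by blast
  qed
  have "a \<noteq> b"
  proof
    assume "a = b"
    then have "a j0 = b j0" by simp
    then show False using j0 \<delta>pos unfolding a_def b_def e_def y_def by auto
  qed
  moreover have "v = (\<lambda>j. (1/2) * a j + (1 - 1/2) * b j)"
    unfolding a_def b_def by (auto simp: field_simps)
  ultimately have "\<exists>a\<in>?P. \<exists>b\<in>?P. a \<noteq> b \<and> (\<exists>t::real. 0 < t \<and> t < 1 \<and> v = (\<lambda>j. t * a j + (1 - t) * b j))"
    using aP bP by (intro bexI[of _ a] bexI[of _ b] conjI exI[of _ "1/2"]) auto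
  then show False using v unfolding vertices_of_def by blast
qed

lemma vertex_is_uv:
  assumes r: "r > 0" and v: "v \<in> vertices_of (lecture_hall_simplex n (\<lambda>_. r))"
  shows "\<exists>k\<le>n. v = uv n r k"
proof -
  let ?P = "lecture_hall_simplex n (\<lambda>_. r)"
  have vP: "v \<in> ?P" using v unfolding vertices_of_def by blast
  have v01: "\<And>j. j < n \<Longrightarrow> v j = 0 \<or> v j = real r" using vertex_01[OF r v] by blast
  have vz: "\<And>j. j \<ge> n \<Longrightarrow> v j = 0" using vP P_char[OF r] by blast
  show ?thesis
  proof (cases "\<exists>j. j < n \<and> v j = real r")
    case True
    define k where "k = (LEAST j. j < n \<and> v j = real r)"
    have k0: "k < n \<and> v k = real r" unfolding k_def by (rule LeastI_ex[OF True])
    then have k: "k < n" "v k = real r" by simp_all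
    have "v = uv n r k"
    proof
      fix j
      show "v j = uv n r k j"
      proof (cases "j < n")
        case False then show ?thesis using vz by (simp add: uv_def)
      next
        case jn: True
        show ?thesis
        proof (cases "k \<le> j")
          case True
          have "v k \<le> v j" using P_mono[OF r vP True jn] .
          then have "v j = real r" using k P_bounds[OF r vP jn] by simp
          then show ?thesis using True jn by (simp add: uv_def)
        next
          case False
          then have "j < k" by simp
          then have "\<not> (j < n \<and> v j = real r)" unfolding k_def by (rule not_less_Least)
          then have "v j = 0" using v01 jn by blast
          then show ?thesis using False by (simp add: uv_def)
        qed
      qed
    qed
    then show ?thesis using k(1) by (intro exI[of _ k]) simp
  next
    case False
    have "v = uv n r n"
    proof
      fix j show "v j = uv n r n j"
      proof (cases "j < n")
        case True
        then have "v j \<noteq> real r" using False by blast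
        then have "v j = 0" using v01 True by blast
        then show ?thesis by (simp add: uv_def)
      next
        case False
        then show ?thesis using vz by (simp add: uv_def)
      qed
    qed
    then show ?thesis by (intro exI[of _ n]) simp
  qed
qed

lemma vertices_P:
  assumes r: "r > 0" and n: "n \<ge> 1"
  shows "vertices_of (lecture_hall_simplex n (\<lambda>_. r)) = uv n r ` {..n}"
proof
  show "vertices_of (lecture_hall_simplex n (\<lambda>_. r)) \<subseteq> uv n r ` {..n}"
    using vertex_is_uv[OF r] by blast
  show "uv n r ` {..n} \<subseteq> vertices_of (lecture_hall_simplex n (\<lambda>_. r))"
    using uv_vertex[OF r n] by blast
qed

lemma uv_inj:
  assumes r: "r > 0"
  shows "inj_on (uv n r) {..n}"
proof
  fix k l assume k: "k \<in> {..n}" and l: "l \<in> {..n}" and e: "uv n r k = uv n r l"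
  show "k = l"
  proof (rule ccontr)
    assume "k \<noteq> l"
    then consider "k < l" | "l < k" by linarith
    then show False
    proof cases
      case 1
      then have "uv n r k k = real r" "uv n r l k = 0" using l by (auto simp: uv_def)
      then show False using e r by simp
    next
      case 2
      then have "uv n r l l = real r" "uv n r k l = 0" using k by (auto simp: uv_def)
      then show False using e r by simp
    qed
  qed
qed

lemma uv_sum:
  assumes r: "r > 0"
  shows "(\<Sum>v\<in>uv n r ` {..n}. f v) = (\<Sum>k\<le>n. f (uv n r k))"
  using sum.reindex[OF uv_inj[OF r]] by simp


lemma uv_lin_sum:
  assumes j: "j < n"
  shows "(\<Sum>k\<le>n. c k * uv n r k j) = real r * (\<Sum>k\<le>j. c k)"
proof -
  have "(\<Sum>k\<le>n. c k * uv n r k j) = (\<Sum>k\<le>n. if k \<le> j then c k * real r else 0)"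
    using j by (intro sum.cong) (auto simp: uv_def)
  also have "\<dots> = (\<Sum>k\<in>{k\<in>{..n}. k \<le> j}. c k * real r)"
    by (rule sum.inter_filter[symmetric]) simp
  also have "{k\<in>{..n}. k \<le> j} = {..j}" using j by auto
  also have "(\<Sum>k\<le>j. c k * real r) = real r * (\<Sum>k\<le>j. c k)"
    by (simp add: sum_distrib_left mult.commute)
  finally show ?thesis .
qed

lemma opp_char:
  assumes r: "r > 0"
  shows "x \<in> open_par_points n (uv n r ` {..n}) \<longleftrightarrow>
    (\<forall>j>n. x j = 0) \<and> (\<exists>c. (\<forall>k\<le>n. 0 < c k \<and> c k < 1) \<and>
        (\<forall>j<n. real_of_int (x j) = real r * (\<Sum>k\<le>j. c k)) \<and> real_of_int (x n) = (\<Sum>k\<le>n. c k))"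
  (is "?L \<longleftrightarrow> ?R")
proof
  assume L: ?L
  then obtain C where C: "\<forall>v\<in>uv n r ` {..n}. 0 < C v \<and> C v < 1"
    "\<forall>j<n. real_of_int (x j) = (\<Sum>v\<in>uv n r ` {..n}. C v * v j)"
    "real_of_int (x n) = (\<Sum>v\<in>uv n r ` {..n}. C v)"
    unfolding open_par_points_def by blast
  define c where "c = (\<lambda>k. C (uv n r k))"
  have "\<forall>k\<le>n. 0 < c k \<and> c k < 1" using C(1) unfolding c_def by auto
  moreover have "\<forall>j<n. real_of_int (x j) = real r * (\<Sum>k\<le>j. c k)"
  proof (intro allI impI)
    fix j assume j: "j < n"
    have "real_of_int (x j) = (\<Sum>v\<in>uv n r ` {..n}. C v * v j)" using C(2) j by blast
    also have "\<dots> = (\<Sum>k\<le>n. c k * uv n r k j)" unfolding c_def by (rule uv_sum[OF r])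
    also have "\<dots> = real r * (\<Sum>k\<le>j. c k)" by (rule uv_lin_sum[OF j])
    finally show "real_of_int (x j) = real r * (\<Sum>k\<le>j. c k)" .
  qed
  moreover have "real_of_int (x n) = (\<Sum>k\<le>n. c k)"
    using C(3) uv_sum[OF r] unfolding c_def by simp
  moreover have "\<forall>j>n. x j = 0" using L unfolding open_par_points_def by blast
  ultimately show ?R by blast
next
  assume R: ?R
  then obtain c where c: "\<forall>k\<le>n. 0 < c k \<and> c k < 1"
        "\<forall>j<n. real_of_int (x j) = real r * (\<Sum>k\<le>j. c k)" "real_of_int (x n) = (\<Sum>k\<le>n. c k)"
    by blast
  define C where "C = (\<lambda>v. c (inv_into {..n} (uv n r) v))"
  have Ck: "C (uv n r k) = c k" if "k \<le> n" for k
    unfolding C_def using inv_into_f_f[OF uv_inj[OF r], of k] that by simp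
  have "\<forall>v\<in>uv n r ` {..n}. 0 < C v \<and> C v < 1" using c(1) Ck by auto
  moreover have "\<forall>j<n. real_of_int (x j) = (\<Sum>v\<in>uv n r ` {..n}. C v * v j)"
  proof (intro allI impI)
    fix j assume j: "j < n"
    have "(\<Sum>v\<in>uv n r ` {..n}. C v * v j) = (\<Sum>k\<le>n. C (uv n r k) * uv n r k j)"
      by (rule uv_sum[OF r])
    also have "\<dots> = (\<Sum>k\<le>n. c k * uv n r k j)" by (intro sum.cong) (auto simp: Ck)
    also have "\<dots> = real r * (\<Sum>k\<le>j. c k)" by (rule uv_lin_sum[OF j])
    finally show "real_of_int (x j) = (\<Sum>v\<in>uv n r ` {..n}. C v * v j)" using c(2) j by simp
  qed
  moreover have "real_of_int (x n) = (\<Sum>v\<in>uv n r ` {..n}. C v)"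
    using c(3) uv_sum[OF r, of C] Ck by simp
  moreover have "\<forall>j>n. x j = 0" using R by blast
  ultimately show ?L unfolding open_par_points_def by blast
qed


definition xa :: "nat \<Rightarrow> nat \<Rightarrow> (nat \<Rightarrow> nat) \<Rightarrow> nat \<Rightarrow> int" where
  "xa n r a = (\<lambda>j. if j < n then int (\<Sum>k\<le>j. a k) else if j = n then int ((\<Sum>k\<le>n. a k) div r) else 0)"

lemma xa_in_opp:
  assumes a: "a \<in> Aset n r"
  shows "xa n r a \<in> open_par_points n (uv n r ` {..n})"
proof -
  have r: "r > 0" using Aset_r[OF a] .
  have ar: "\<forall>k\<le>n. 0 < a k \<and> a k < r" and dv: "r dvd (\<Sum>k\<le>n. a k)" using a unfolding Aset_def by auto
  define c where "c = (\<lambda>k. real (a k) / real r)"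
  have "\<forall>k\<le>n. 0 < c k \<and> c k < 1" using ar r unfolding c_def by auto
  moreover have "\<forall>j<n. real_of_int (xa n r a j) = real r * (\<Sum>k\<le>j. c k)"
    using r unfolding c_def xa_def by (simp add: sum_divide_distrib[symmetric])
  moreover have "real_of_int (xa n r a n) = (\<Sum>k\<le>n. c k)"
    using r dv unfolding c_def xa_def by (simp add: sum_divide_distrib[symmetric] real_of_nat_div)
  moreover have "\<forall>j>n. xa n r a j = 0" unfolding xa_def by simp
  ultimately show ?thesis unfolding opp_char[OF r] by blast
qed

lemma prefix_eq_imp_eq:
  fixes a b :: "nat \<Rightarrow> nat"
  assumes "\<forall>j\<le>n. (\<Sum>k\<le>j. a k) = (\<Sum>k\<le>j. b k)" "j \<le> n"
  shows "a j = b j"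
proof (cases j)
  case 0 then show ?thesis using assms by auto
next
  case (Suc i)
  have "(\<Sum>k\<le>Suc i. a k) = (\<Sum>k\<le>Suc i. b k)" "(\<Sum>k\<le>i. a k) = (\<Sum>k\<le>i. b k)"
    using assms Suc by (blast, simp)
  then show ?thesis using Suc by (simp del: sum.atMost_Suc add: sum.atMost_Suc)
qed

lemma xa_inj: "inj_on (xa n r) (Aset n r)"
proof
  fix a b assume a: "a \<in> Aset n r" and b: "b \<in> Aset n r" and e: "xa n r a = xa n r b"
  have dva: "r dvd (\<Sum>k\<le>n. a k)" and dvb: "r dvd (\<Sum>k\<le>n. b k)" using a b unfolding Aset_def by auto
  have pre: "\<forall>j\<le>n. (\<Sum>k\<le>j. a k) = (\<Sum>k\<le>j. b k)"
  proof (intro allI impI)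
    fix j assume j: "j \<le> n"
    show "(\<Sum>k\<le>j. a k) = (\<Sum>k\<le>j. b k)"
    proof (cases "j < n")
      case True
      then have "xa n r a j = xa n r b j" using e by simp
      then have "int (\<Sum>k\<le>j. a k) = int (\<Sum>k\<le>j. b k)" using True unfolding xa_def by simp
      then show ?thesis by (simp only: of_nat_eq_iff)
    next
      case False
      then have jn: "j = n" using j by simp
      have "xa n r a n = xa n r b n" using e by simp
      then have "(\<Sum>k\<le>n. a k) div r = (\<Sum>k\<le>n. b k) div r" unfolding xa_def by simp
      then show ?thesis using dva dvb jn by (metis dvd_div_mult_self)
    qed
  qed
  show "a = b"
  proof
    fix j show "a j = b j"
    proof (cases "j \<le> n")
      case True then show ?thesis using prefix_eq_imp_eq[OF pre] by blast
    next
      case False then show ?thesis using a b unfolding Aset_def by auto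
    qed
  qed
qed


lemma xa_surj:
  assumes r: "r > 0" and n: "n \<ge> 1" and x: "x \<in> open_par_points n (uv n r ` {..n})"
  shows "\<exists>a\<in>Aset n r. xa n r a = x"
proof -
  obtain c where xz: "\<forall>j>n. x j = 0" and c: "\<forall>k\<le>n. 0 < c k \<and> c k < 1"
        "\<forall>j<n. real_of_int (x j) = real r * (\<Sum>k\<le>j. c k)" "real_of_int (x n) = (\<Sum>k\<le>n. c k)"
    using x unfolding opp_char[OF r] by blast
  define y where "y = (\<lambda>k. if k < n then x k else int r * x n)"
  have Y: "real_of_int (y k) = real r * (\<Sum>i\<le>k. c i)" if "k \<le> n" for k
    using c(2,3) that unfolding y_def by (cases "k < n") auto
  define d where "d = (\<lambda>k. y k - (if k = 0 then 0 else y (k - 1)))"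
  have D: "real_of_int (d k) = real r * c k" if "k \<le> n" for k
  proof (cases k)
    case 0 then show ?thesis using Y[of 0] unfolding d_def by simp
  next
    case (Suc i)
    then have "real_of_int (d k) = real r * (\<Sum>i\<le>Suc i. c i) - real r * (\<Sum>i\<le>i. c i)"
      using Y[of k] Y[of i] that unfolding d_def by simp
    also have "\<dots> = real r * c k" using Suc by (simp add: algebra_simps)
    finally show ?thesis .
  qed
  have dpos: "0 < d k" "d k < int r" if "k \<le> n" for k
  proof -
    have "0 < real r * c k" "real r * c k < real r" using c(1) that r by auto
    then show "0 < d k" "d k < int r" using D[OF that] by linarith+
  qed
  define a where "a = (\<lambda>k. if k \<le> n then nat (d k) else 0)"
  have ad: "int (a k) = d k" if "k \<le> n" for k using dpos[OF that] that unfolding a_def by simp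
  have pre: "int (\<Sum>k\<le>j. a k) = y j" if "j \<le> n" for j
    using that
  proof (induction j)
    case 0 then show ?case using ad[of 0] unfolding d_def by simp
  next
    case (Suc j)
    then have "int (\<Sum>k\<le>Suc j. a k) = y j + int (a (Suc j))" by simp
    also have "\<dots> = y (Suc j)" using ad[OF Suc.prems] unfolding d_def by simp
    finally show ?case .
  qed
  have sn: "int (\<Sum>k\<le>n. a k) = int r * x n" using pre[of n] unfolding y_def by simp
  have xn: "x n \<ge> 0"
  proof -
    have "(\<Sum>k\<le>n. c k) \<ge> 0" using c(1) by (intro sum_nonneg) auto
    then show ?thesis using c(3) by simp
  qed
  have snat: "(\<Sum>k\<le>n. a k) = r * nat (x n)"
  proof -
    have "(\<Sum>k\<le>n. a k) = nat (int (\<Sum>k\<le>n. a k))" by (simp only: nat_int)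
    also have "\<dots> = nat (int r * x n)" using sn by (simp only:)
    also have "\<dots> = r * nat (x n)" using xn by (simp add: nat_mult_distrib)
    finally show ?thesis .
  qed
  have aA: "a \<in> Aset n r"
  proof -
    have "0 < a j \<and> a j < r" if "j \<le> n" for j
    proof -
      have "0 < int (a j)" "int (a j) < int r" using ad[OF that] dpos[OF that] by simp_all
      then show ?thesis by simp
    qed
    moreover have "r dvd (\<Sum>j\<le>n. a j)"
      using snat by simp
    ultimately show ?thesis unfolding Aset_def a_def by auto
  qed
  have "xa n r a = x"
  proof
    fix j
    show "xa n r a j = x j"
    proof (cases "j < n")
      case True
      then show ?thesis using pre[of j] unfolding xa_def y_def by simp
    next
      case False
      show ?thesis
      proof (cases "j = n")
        case True
        from snat have "(\<Sum>k\<le>n. a k) div r = nat (x n)" using r by simp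
        then show ?thesis using True False xn unfolding xa_def by simp
      next
        case False
        then show ?thesis using \<open>\<not> j < n\<close> xz unfolding xa_def by simp
      qed
    qed
  qed
  then show ?thesis using aA by blast
qed

lemma lecture_hall_Aset:
  assumes r: "r > 0" and n: "n \<ge> 1"
  shows "lecture_hall_d n (\<lambda>_. r) = (\<Sum>a\<in>Aset n r. (monom 1 ((\<Sum>j\<le>n. a j) div r) :: int poly))"
proof -
  have bij: "bij_betw (xa n r) (Aset n r) (open_par_points n (uv n r ` {..n}))"
    unfolding bij_betw_def using xa_inj xa_in_opp xa_surj[OF r n] by blast
  have "lecture_hall_d n (\<lambda>_. r) = (\<Sum>x\<in>open_par_points n (uv n r ` {..n}). monom 1 (nat (x n)))"
    unfolding lecture_hall_d_def local_hstar_def vertices_P[OF r n] ..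
  also have "\<dots> = (\<Sum>a\<in>Aset n r. monom 1 (nat (xa n r a n)))"
    using sum.reindex_bij_betw[OF bij, of "\<lambda>x. (monom 1 (nat (x n)) :: int poly)"] by simp
  also have "\<dots> = (\<Sum>a\<in>Aset n r. monom 1 ((\<Sum>j\<le>n. a j) div r))"
    unfolding xa_def by simp
  finally show ?thesis .
qed



definition psum :: "(nat \<Rightarrow> nat) \<Rightarrow> nat \<Rightarrow> nat" where
  "psum x j = (\<Sum>k\<le>j. x k)"

lemma esd_phi_psum: "esd_phi x j = int (psum x j)"
  unfolding esd_phi_def psum_def by simp

lemma psum_Suc: "psum x (Suc j) = psum x j + x (Suc j)"
  unfolding psum_def by simp

lemma psum_0: "psum x 0 = x 0"
  unfolding psum_def by simp

lemma psum_mono: "i \<le> j \<Longrightarrow> psum x i \<le> psum x j"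
  unfolding psum_def by (rule sum_mono2) auto

lemma psum_determines:
  assumes "\<forall>j>n. x j = 0" "\<forall>j>n. y j = 0" "\<forall>j\<le>n. psum x j = psum y j"
  shows "x = y"
proof
  fix j
  show "x j = y j"
  proof (cases "j \<le> n")
    case False then show ?thesis using assms by simp
  next
    case True
    show ?thesis
    proof (cases j)
      case 0 then show ?thesis using assms(3) psum_0 by (metis le0)
    next
      case (Suc i)
      then have "psum x (Suc i) = psum y (Suc i)" "psum x i = psum y i" using assms(3) True by auto
      then show ?thesis using Suc by (simp add: psum_Suc)
    qed
  qed
qed

lemma hermite:
  assumes t: "t > 0"
  shows "(\<Sum>i<t. (x + i) div t) = (x::nat)"
proof (induction x)
  case 0
  have "(\<Sum>i<t. (0 + i) div t) = (\<Sum>i<t. 0::nat)" by (intro sum.cong) auto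
  then show ?case by simp
next
  case (Suc x)
  have "(\<Sum>i<t. (Suc x + i) div t) = (\<Sum>i<t. (x + Suc i) div t)" by simp
  also have "\<dots> = (\<Sum>i<Suc t. (x + i) div t) - x div t"
    by (simp add: sum.lessThan_Suc_shift del: sum.lessThan_Suc)
  also have "\<dots> = (\<Sum>i<t. (x + i) div t) + (x + t) div t - x div t" by simp
  also have "(x + t) div t = x div t + 1" using t by simp
  finally show ?case using Suc by simp
qed

lemma threshold:
  fixes g :: "nat \<Rightarrow> nat"
  assumes t: "t > 0" and g1: "\<forall>i<t. g i \<le> 1" and gm: "\<forall>i i'. i \<le> i' \<longrightarrow> i' < t \<longrightarrow> g i \<le> g i'"
    and g0: "g 0 = 0" and i: "i < t"
  shows "g i = ((\<Sum>k<t. g k) + i) div t"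
proof (cases "g i = 1")
  case True
  have "(\<Sum>k\<in>{i..<t}. (1::nat)) \<le> (\<Sum>k\<in>{i..<t}. g k)"
    using gm True i by (intro sum_mono) (metis atLeastLessThan_iff)
  also have "\<dots> \<le> (\<Sum>k<t. g k)" by (rule sum_mono2) auto
  finally have lo: "t - i \<le> (\<Sum>k<t. g k)" by simp
  have "(\<Sum>k<t. g k) = g 0 + (\<Sum>k\<in>{1..<t}. g k)"
    using t by (metis One_nat_def lessThan_atLeast0 sum.atLeast_Suc_lessThan)
  also have "\<dots> \<le> 0 + (\<Sum>k\<in>{1..<t}. 1)" using g1 g0 by (intro add_mono sum_mono) auto
  finally have hi: "(\<Sum>k<t. g k) \<le> t - 1" by simp
  have "((\<Sum>k<t. g k) + i) div t = 1"
    using lo hi i t by (intro div_nat_eqI) auto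
  then show ?thesis using True by simp
next
  case False
  then have gi: "g i = 0" using g1 i by fastforce
  have "(\<Sum>k<t. g k) = (\<Sum>k\<in>{i<..<t}. g k)"
  proof -
    have "(\<Sum>k<t. g k) = (\<Sum>k\<in>{..i}. g k) + (\<Sum>k\<in>{i<..<t}. g k)"
      using i by (subst sum.union_disjoint[symmetric]) (auto intro: sum.cong)
    moreover have "(\<Sum>k\<in>{..i}. g k) = 0"
    proof (intro sum.neutral ballI)
      fix k assume "k \<in> {..i}"
      then have "g k \<le> g i" using gm i by auto
      then show "g k = 0" using gi by simp
    qed
    ultimately show ?thesis by simp
  qed
  also have "\<dots> \<le> (\<Sum>k\<in>{i<..<t}. 1)" using g1 by (intro sum_mono) auto
  finally have "(\<Sum>k<t. g k) + i < t" using i by simp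
  then show ?thesis using gi by simp
qed

definition le1 :: "nat \<Rightarrow> (nat \<Rightarrow> nat) \<Rightarrow> (nat \<Rightarrow> nat) \<Rightarrow> bool" where
  "le1 n x y \<longleftrightarrow> (\<forall>j\<le>n. psum x j \<le> psum y j \<and> psum y j \<le> psum x j + 1)"

lemma face_pair:
  assumes F: "F \<in> esd_faces n r" and x: "x \<in> F" and y: "y \<in> F"
  shows "le1 n x y \<or> le1 n y x"
proof -
  have "(\<forall>j\<le>n. esd_phi x j - esd_phi y j \<in> {0,1}) \<or> (\<forall>j\<le>n. esd_phi y j - esd_phi x j \<in> {0,1})"
    using F x y unfolding esd_faces_def by blast
  then show ?thesis unfolding le1_def esd_phi_psum by force
qed

definition kappa :: "nat \<Rightarrow> (nat \<Rightarrow> nat) \<Rightarrow> nat" where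
  "kappa n v = (\<Sum>j\<le>n. psum v j)"

lemma le1_kappa: "le1 n x y \<Longrightarrow> kappa n x \<le> kappa n y"
  unfolding le1_def kappa_def by (intro sum_mono) auto

lemma le1_kappa_eq:
  assumes "le1 n x y" "kappa n x = kappa n y"
  shows "\<forall>j\<le>n. psum x j = psum y j"
proof (rule ccontr)
  assume "\<not> (\<forall>j\<le>n. psum x j = psum y j)"
  then obtain j where j: "j \<le> n" "psum x j \<noteq> psum y j" by blast
  then have "psum x j < psum y j" using assms(1) unfolding le1_def by force
  then have "kappa n x < kappa n y" unfolding kappa_def
    using assms(1) j unfolding le1_def by (intro sum_strict_mono_ex1) auto
  then show False using assms(2) by simp
qed

lemma chain_sort:
  assumes M: "set_mset M \<in> esd_faces n r"
  shows "\<exists>l. mset l = M \<and> (\<forall>i i'. i \<le> i' \<longrightarrow> i' < length l \<longrightarrow> le1 n (l ! i) (l ! i'))"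
proof -
  obtain xs where xs: "mset xs = M" using ex_mset by blast
  define l where "l = sort_key (kappa n) xs"
  have ml: "mset l = M" unfolding l_def using xs by simp
  have so: "sorted (map (kappa n) l)" unfolding l_def by simp
  have "le1 n (l ! i) (l ! i')" if ii: "i \<le> i'" "i' < length l" for i i'
  proof -
    have mem: "l ! i \<in> set_mset M" "l ! i' \<in> set_mset M"
      using ii ml by (metis in_set_conv_nth le_less_trans set_mset_mset)+
    have k: "kappa n (l ! i) \<le> kappa n (l ! i')"
      using so ii by (metis (no_types, lifting) le_less_trans length_map nth_map sorted_iff_nth_mono)
    from face_pair[OF M mem] show ?thesis
    proof
      assume "le1 n (l ! i') (l ! i)"
      then have "kappa n (l ! i') = kappa n (l ! i)" using k le1_kappa by (simp add: le_antisym)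
      then have "\<forall>j\<le>n. psum (l ! i') j = psum (l ! i) j" using le1_kappa_eq \<open>le1 n (l ! i') (l ! i)\<close> by blast
      then show ?thesis unfolding le1_def by simp
    qed
  qed
  then show ?thesis using ml by blast
qed

lemma chain_psum:
  assumes ch: "\<forall>i i'. i \<le> i' \<longrightarrow> i' < length l \<longrightarrow> le1 n (l ! i) (l ! i')"
    and t: "length l = t" "t > 0" and i: "i < t" and j: "j \<le> n"
  shows "psum (l ! i) j = ((\<Sum>k<t. psum (l ! k) j) + i) div t"
proof -
  define q where "q = psum (l ! 0) j"
  define g where "g = (\<lambda>k. psum (l ! k) j - q)"
  have ge: "psum (l ! k) j \<ge> q" "psum (l ! k) j \<le> q + 1" if "k < t" for k
    using ch[rule_format, of 0 k] that t j unfolding le1_def q_def by auto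
  have g1: "\<forall>k<t. g k \<le> 1" using ge unfolding g_def by fastforce
  have gm: "\<forall>k k'. k \<le> k' \<longrightarrow> k' < t \<longrightarrow> g k \<le> g k'"
    using ch t j unfolding g_def le1_def by (auto intro: diff_le_mono)
  have g0: "g 0 = 0" unfolding g_def q_def by simp
  have th: "g i = ((\<Sum>k<t. g k) + i) div t" by (rule threshold[OF t(2) g1 gm g0 i])
  have "(\<Sum>k<t. psum (l ! k) j) = (\<Sum>k<t. q + g k)"
    using ge unfolding g_def by (intro sum.cong) auto
  also have "\<dots> = t * q + (\<Sum>k<t. g k)" by (simp add: sum.distrib)
  finally have B: "(\<Sum>k<t. psum (l ! k) j) = t * q + (\<Sum>k<t. g k)" .
  have "((\<Sum>k<t. psum (l ! k) j) + i) div t = q + ((\<Sum>k<t. g k) + i) div t"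
    unfolding B using t(2) by (simp add: add.assoc)
  also have "\<dots> = psum (l ! i) j" using th ge[OF i] unfolding g_def by simp
  finally show ?thesis by simp
qed


definition Sm :: "(nat \<Rightarrow> nat) multiset \<Rightarrow> nat \<Rightarrow> nat" where
  "Sm M = (\<lambda>j. sum_mset (image_mset (\<lambda>v. v j) M))"

lemma psum_Sm: "psum (Sm M) j = sum_mset (image_mset (\<lambda>v. psum v j) M)"
proof (induction M)
  case empty then show ?case by (simp add: psum_def Sm_def)
next
  case (add x M)
  then show ?case by (simp add: psum_def Sm_def sum.distrib)
qed

lemma sum_Sm: "(\<Sum>j\<in>A. Sm M j) = sum_mset (image_mset (\<lambda>v. \<Sum>j\<in>A. v j) M)"
proof (induction M)
  case empty then show ?case by (simp add: Sm_def)
next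
  case (add x M)
  then show ?case by (simp add: Sm_def sum.distrib)
qed

lemma sum_mset_list: "sum_mset (image_mset f (mset l)) = (\<Sum>k<length l. f (l ! k))"
proof -
  have "sum_mset (image_mset f (mset l)) = sum_list (map f l)"
    by (simp add: sum_mset_sum_list flip: mset_map)
  also have "\<dots> = (\<Sum>k<length l. f (l ! k))"
    by (simp add: sum_list_sum_nth atLeast0LessThan)
  finally show ?thesis .
qed

definition wv :: "nat \<Rightarrow> nat \<Rightarrow> (nat \<Rightarrow> nat) \<Rightarrow> nat \<Rightarrow> nat \<Rightarrow> nat" where
  "wv n t b i = (\<lambda>j. if j \<le> n then (psum b j + i) div t - (if j = 0 then 0 else (psum b (j - 1) + i) div t) else 0)"

definition dec :: "nat \<Rightarrow> nat \<Rightarrow> (nat \<Rightarrow> nat) \<Rightarrow> (nat \<Rightarrow> nat) multiset" where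
  "dec n t b = image_mset (wv n t b) (mset_set {..<t})"

lemma psum_wv: "j \<le> n \<Longrightarrow> psum (wv n t b i) j = (psum b j + i) div t"
proof (induction j)
  case 0 then show ?case by (simp add: psum_0 wv_def)
next
  case (Suc j)
  have m: "(psum b j + i) div t \<le> (psum b (Suc j) + i) div t"
    by (intro div_le_mono add_right_mono psum_mono) simp
  show ?case using Suc m by (simp add: psum_Suc wv_def)
qed

lemma dec_unique:
  assumes M: "set_mset M \<in> esd_faces n r" and t: "size M = t" "t > 0"
  shows "M = dec n t (Sm M)"
proof -
  obtain l where l: "mset l = M" and ch: "\<forall>i i'. i \<le> i' \<longrightarrow> i' < length l \<longrightarrow> le1 n (l ! i) (l ! i')"
    using chain_sort[OF M] by blast
  have len: "length l = t" using l t by (metis size_mset)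
  have V: "\<forall>j>n. v j = 0" if "v \<in> set_mset M" for v
    using M that unfolding esd_faces_def esd_vertices_def by blast
  have eq: "l ! i = wv n t (Sm M) i" if i: "i < t" for i
  proof (rule psum_determines[of n])
    show "\<forall>j>n. (l ! i) j = 0" using V[of "l ! i"] l i len by (metis nth_mem set_mset_mset)
    show "\<forall>j>n. wv n t (Sm M) i j = 0" by (simp add: wv_def)
    show "\<forall>j\<le>n. psum (l ! i) j = psum (wv n t (Sm M) i) j"
    proof (intro allI impI)
      fix j assume j: "j \<le> n"
      have "psum (Sm M) j = (\<Sum>k<t. psum (l ! k) j)"
        unfolding psum_Sm using sum_mset_list[of "\<lambda>v. psum v j" l] l len by simp
      then show "psum (l ! i) j = psum (wv n t (Sm M) i) j"
        using chain_psum[OF ch len t(2) i j] psum_wv[OF j] by simp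
    qed
  qed
  have "map (\<lambda>i. l ! i) [0..<t] = l" using len map_nth[of l] by simp
  then have "M = mset (map (\<lambda>i. l ! i) [0..<t])" using l by simp
  also have "\<dots> = image_mset (\<lambda>i. l ! i) (mset_set {..<t})" by (simp add: atLeast0LessThan)
  also have "\<dots> = image_mset (wv n t (Sm M)) (mset_set {..<t})"
    by (intro image_mset_cong) (simp add: eq)
  finally show ?thesis unfolding dec_def .
qed


definition Pts :: "nat \<Rightarrow> nat \<Rightarrow> nat set \<Rightarrow> nat \<Rightarrow> (nat \<Rightarrow> nat) set" where
  "Pts n r G t = {b. (\<forall>j. j \<notin> G \<longrightarrow> b j = 0) \<and> (\<Sum>j\<le>n. b j) = t * r}"

definition Msets :: "nat \<Rightarrow> nat \<Rightarrow> nat set \<Rightarrow> nat \<Rightarrow> (nat \<Rightarrow> nat) multiset set" where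
  "Msets n r G t = {M. set_mset M \<in> esd_restrict n r G \<and> size M = t}"

lemma div_diff01:
  fixes B i i' t :: nat
  assumes "i' \<le> i" "i < t"
  shows "(B + i') div t \<le> (B + i) div t" "(B + i) div t \<le> (B + i') div t + 1"
proof -
  show "(B + i') div t \<le> (B + i) div t" using assms by (intro div_le_mono) simp
  have t: "t > 0" using assms by simp
  have "(B + i) div t \<le> (B + i' + t) div t" using assms by (intro div_le_mono) simp
  also have "\<dots> = (B + i') div t + 1" using t by simp
  finally show "(B + i) div t \<le> (B + i') div t + 1" .
qed

lemma Sm_dec: "Sm (dec n t b) j = (\<Sum>i<t. wv n t b i j)"
  unfolding Sm_def dec_def by (simp add: sum_unfold_sum_mset image_mset.compositionality comp_def)

lemma dec_props:
  assumes G: "G \<subseteq> {..n}" and t: "t > 0" and b: "b \<in> Pts n r G t"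
  shows "set_mset (dec n t b) \<in> esd_restrict n r G" "size (dec n t b) = t" "Sm (dec n t b) = b"
proof -
  have bG: "\<And>j. j \<notin> G \<Longrightarrow> b j = 0" and bs: "(\<Sum>j\<le>n. b j) = t * r" using b unfolding Pts_def by auto
  have bn: "\<forall>j>n. b j = 0"
  proof (intro allI impI)
    fix j assume "n < j"
    then have "j \<notin> G" using G by auto
    then show "b j = 0" by (rule bG)
  qed
  have set: "set_mset (dec n t b) = wv n t b ` {..<t}" unfolding dec_def by simp
  show "size (dec n t b) = t" unfolding dec_def by simp
  have vert: "wv n t b i \<in> esd_vertices n r" if i: "i < t" for i
  proof -
    have "(\<Sum>j\<le>n. wv n t b i j) = psum (wv n t b i) n" unfolding psum_def ..
    also have "\<dots> = (t * r + i) div t" using psum_wv[of n n t b i] bs unfolding psum_def by simp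
    also have "\<dots> = r" using i t by simp
    finally show ?thesis unfolding esd_vertices_def by (simp add: wv_def)
  qed
  have pair: "(\<forall>j\<le>n. esd_phi (wv n t b i) j - esd_phi (wv n t b i') j \<in> {0,1})"
    if "i' \<le> i" "i < t" for i i'
  proof (intro allI impI)
    fix j assume j: "j \<le> n"
    show "esd_phi (wv n t b i) j - esd_phi (wv n t b i') j \<in> {0,1}"
      unfolding esd_phi_psum psum_wv[OF j] using div_diff01[OF that, of "psum b j"] by auto
  qed
  have supp: "supp_carrier (wv n t b ` {..<t}) \<subseteq> G"
  proof
    fix j assume "j \<in> supp_carrier (wv n t b ` {..<t})"
    then obtain i where i: "i < t" and nz: "wv n t b i j \<noteq> 0" unfolding supp_carrier_def by auto
    show "j \<in> G"
    proof (rule ccontr)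
      assume jG: "j \<notin> G"
      have jn: "j \<le> n" using nz by (simp add: wv_def split: if_splits)
      show False
      proof (cases j)
        case 0 then show ?thesis using nz bG[OF jG] jn i by (simp add: wv_def psum_0)
      next
        case (Suc k)
        then have "psum b j = psum b k" using bG[OF jG] by (simp add: psum_Suc)
        then show ?thesis using nz jn Suc by (simp add: wv_def)
      qed
    qed
  qed
  have face: "wv n t b ` {..<t} \<in> esd_faces n r"
    unfolding esd_faces_def
  proof (intro CollectI conjI ballI)
    show "wv n t b ` {..<t} \<subseteq> esd_vertices n r" using vert by auto
    fix x y assume "x \<in> wv n t b ` {..<t}" "y \<in> wv n t b ` {..<t}"
    then obtain i i' where "i < t" "i' < t" "x = wv n t b i" "y = wv n t b i'" by auto
    then show "(\<forall>j\<le>n. esd_phi x j - esd_phi y j \<in> {0, 1}) \<or> (\<forall>j\<le>n. esd_phi y j - esd_phi x j \<in> {0, 1})"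
      using pair by (cases "i' \<le> i") auto
  qed
  show "set_mset (dec n t b) \<in> esd_restrict n r G"
    unfolding set esd_restrict_def using face supp by simp
  show "Sm (dec n t b) = b"
  proof (rule psum_determines[of n])
    show "\<forall>j>n. Sm (dec n t b) j = 0" unfolding Sm_dec by (simp add: wv_def)
    show "\<forall>j>n. b j = 0" by (rule bn)
    show "\<forall>j\<le>n. psum (Sm (dec n t b)) j = psum b j"
    proof (intro allI impI)
      fix j assume j: "j \<le> n"
      have "psum (Sm (dec n t b)) j = (\<Sum>i<t. psum (wv n t b i) j)"
        unfolding psum_def Sm_dec by (rule sum.swap)
      also have "\<dots> = (\<Sum>i<t. (psum b j + i) div t)" using psum_wv[OF j] by simp
      also have "\<dots> = psum b j" by (rule hermite[OF t])
      finally show "psum (Sm (dec n t b)) j = psum b j" .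
    qed
  qed
qed


lemma finite_bounded_funs: "finite {f :: nat \<Rightarrow> nat. (\<forall>j. f j \<le> B) \<and> (\<forall>j>n. f j = 0)}"
proof -
  let ?S = "{f :: nat \<Rightarrow> nat. (\<forall>j. f j \<le> B) \<and> (\<forall>j>n. f j = 0)}"
  have inj: "inj_on (\<lambda>f. map f [0..<Suc n]) ?S"
  proof
    fix f g assume f: "f \<in> ?S" and g: "g \<in> ?S" and e: "map f [0..<Suc n] = map g [0..<Suc n]"
    show "f = g"
    proof
      fix j show "f j = g j"
      proof (cases "j \<le> n")
        case True
        then have "j < Suc n" by linarith
        then have "j \<in> set [0..<Suc n]" by (simp del: upt_Suc)
        then show ?thesis using e by (metis map_eq_conv)
      next
        case False then show ?thesis using f g by simp
      qed
    qed
  qed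
  have "(\<lambda>f. map f [0..<Suc n]) ` ?S \<subseteq> {xs. set xs \<subseteq> {..B} \<and> length xs = Suc n}" by auto
  moreover have "finite {xs. set xs \<subseteq> {..B} \<and> length xs = Suc n}"
    by (rule finite_lists_length_eq) simp
  ultimately have "finite ((\<lambda>f. map f [0..<Suc n]) ` ?S)" by (rule finite_subset)
  then show ?thesis using finite_image_iff[OF inj] by blast
qed

lemma finite_esd_vertices: "finite (esd_vertices n r)"
proof (rule finite_subset[OF _ finite_bounded_funs[of r n]])
  show "esd_vertices n r \<subseteq> {f. (\<forall>j. f j \<le> r) \<and> (\<forall>j>n. f j = 0)}"
  proof (clarify, intro conjI allI impI)
    fix f j assume f: "f \<in> esd_vertices n r"
    show "f j \<le> r"
    proof (cases "j \<le> n")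
      case True
      then have "f j \<le> (\<Sum>k\<le>n. f k)" by (intro member_le_sum) auto
      then show ?thesis using f unfolding esd_vertices_def by simp
    next
      case False then show ?thesis using f unfolding esd_vertices_def by simp
    qed
  qed (auto simp: esd_vertices_def)
qed

lemma finite_esd_restrict: "finite (esd_restrict n r G)"
proof -
  have "esd_restrict n r G \<subseteq> Pow (esd_vertices n r)"
    unfolding esd_restrict_def esd_faces_def by auto
  then show ?thesis using finite_esd_vertices by (meson finite_Pow_iff finite_subset)
qed

lemma face_finite: "F \<in> esd_restrict n r G \<Longrightarrow> finite F"
  unfolding esd_restrict_def esd_faces_def using finite_esd_vertices finite_subset by blast

lemma card_set_mset_le: "card (set_mset M) \<le> size M"
  by (induction M) (auto simp: card_insert_if)

lemma card_set_size:
  assumes F: "finite F"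
  shows "card {M. set_mset M = F \<and> size M = t} =
         (if t < card F then 0 else (card F + (t - card F) - 1) choose (t - card F))"
proof (cases "t < card F")
  case True
  have "{M. set_mset M = F \<and> size M = t} = {}"
  proof (rule ccontr)
    assume "{M. set_mset M = F \<and> size M = t} \<noteq> {}"
    then obtain M where "set_mset M = F" "size M = t" by auto
    then have "card F \<le> t" using card_set_mset_le[of M] by simp
    then show False using True by simp
  qed
  then show ?thesis using True by (metis card.empty)
next
  case False
  let ?A = "{M. set_mset M = F \<and> size M = t}"
  let ?B = "multisets_of_size F (t - card F)"
  have "bij_betw (\<lambda>M. M - mset_set F) ?A ?B"
  proof (rule bij_betw_byWitness[where f'="\<lambda>M. M + mset_set F"])
    show "\<forall>M\<in>?A. M - mset_set F + mset_set F = M"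
    proof
      fix M assume "M \<in> ?A"
      then have "mset_set F \<subseteq># M" using F by (auto simp: subseteq_mset_def count_mset_set')
      then show "M - mset_set F + mset_set F = M" by (simp add: subset_mset.diff_add)
    qed
    show "\<forall>M\<in>?B. M + mset_set F - mset_set F = M" by simp
    show "(\<lambda>M. M - mset_set F) ` ?A \<subseteq> ?B"
    proof
      fix M' assume "M' \<in> (\<lambda>M. M - mset_set F) ` ?A"
      then obtain M where M: "M \<in> ?A" "M' = M - mset_set F" by auto
      then have sub: "mset_set F \<subseteq># M" using F by (auto simp: subseteq_mset_def count_mset_set')
      have "set_mset M' \<subseteq> F" using M in_diffD by fastforce
      moreover have "size M' = t - card F" using M sub by (simp add: size_Diff_submset)
      ultimately show "M' \<in> ?B" unfolding multisets_of_size_def by simp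
    qed
    show "(\<lambda>M. M + mset_set F) ` ?B \<subseteq> ?A"
      using F False unfolding multisets_of_size_def by auto
  qed
  then have "card ?A = card ?B" by (rule bij_betw_same_card)
  then show ?thesis using False card_multisets_of_size[OF F] by simp
qed


definition cnt :: "nat \<Rightarrow> nat \<Rightarrow> nat" where
  "cnt k t = (if t < k then 0 else (k + (t - k) - 1) choose (t - k))"

lemma restrict_face: "F \<in> esd_restrict n r G \<Longrightarrow> F \<in> esd_faces n r"
  unfolding esd_restrict_def by simp

lemma Sm_Pts:
  assumes M: "M \<in> Msets n r G t"
  shows "Sm M \<in> Pts n r G t"
proof -
  have F: "set_mset M \<in> esd_restrict n r G" and s: "size M = t" using M unfolding Msets_def by auto
  have vz: "v j = 0" if "v \<in># M" "j \<notin> G" for v j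
    using F that unfolding esd_restrict_def supp_carrier_def by blast
  have vs: "(\<Sum>j\<le>n. v j) = r" if "v \<in># M" for v
    using F that unfolding esd_restrict_def esd_faces_def esd_vertices_def by blast
  have "Sm M j = 0" if "j \<notin> G" for j
  proof -
    have "image_mset (\<lambda>v. v j) M = image_mset (\<lambda>v. 0) M" using vz[OF _ that] by (intro image_mset_cong) auto
    then show ?thesis unfolding Sm_def by simp
  qed
  moreover have "(\<Sum>j\<le>n. Sm M j) = t * r"
  proof -
    have "(\<Sum>j\<le>n. Sm M j) = sum_mset (image_mset (\<lambda>v. \<Sum>j\<le>n. v j) M)" by (rule sum_Sm)
    also have "image_mset (\<lambda>v. \<Sum>j\<le>n. v j) M = image_mset (\<lambda>v. r) M" using vs by (intro image_mset_cong) auto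
    finally show ?thesis using s by (simp add: sum_mset_constant)
  qed
  ultimately show ?thesis unfolding Pts_def by simp
qed

lemma card_Pts_Msets:
  assumes G: "G \<subseteq> {..n}"
  shows "card (Pts n r G t) = card (Msets n r G t)"
proof (cases "t = 0")
  case True
  have "Pts n r G t = {\<lambda>_. 0}"
  proof
    show "Pts n r G t \<subseteq> {\<lambda>_. 0}"
    proof
      fix b assume b: "b \<in> Pts n r G t"
      have "b j = 0" for j
      proof (cases "j \<le> n")
        case True
        have "b j \<le> (\<Sum>k\<le>n. b k)" by (rule member_le_sum) (use True in simp_all)
        then show ?thesis using b \<open>t = 0\<close> unfolding Pts_def by simp
      next
        case False then show ?thesis using b G unfolding Pts_def by auto
      qed
      then show "b \<in> {\<lambda>_. 0}" by auto
    qed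
    show "{\<lambda>_. 0} \<subseteq> Pts n r G t" using True unfolding Pts_def by simp
  qed
  moreover have "Msets n r G t = {{#}}"
  proof -
    have "{} \<in> esd_restrict n r G" unfolding esd_restrict_def esd_faces_def supp_carrier_def by simp
    then show ?thesis unfolding Msets_def using True by auto
  qed
  ultimately show ?thesis by simp
next
  case False
  then have t: "t > 0" by simp
  have "bij_betw Sm (Msets n r G t) (Pts n r G t)"
    unfolding bij_betw_def
  proof
    show "inj_on Sm (Msets n r G t)"
    proof
      fix M M' assume M: "M \<in> Msets n r G t" and M': "M' \<in> Msets n r G t" and e: "Sm M = Sm M'"
      have "M = dec n t (Sm M)" using M t dec_unique restrict_face unfolding Msets_def by blast
      moreover have "M' = dec n t (Sm M')" using M' t dec_unique restrict_face unfolding Msets_def by blast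
      ultimately show "M = M'" using e by simp
    qed
    show "Sm ` Msets n r G t = Pts n r G t"
    proof
      show "Sm ` Msets n r G t \<subseteq> Pts n r G t" using Sm_Pts by blast
      show "Pts n r G t \<subseteq> Sm ` Msets n r G t"
      proof
        fix b assume b: "b \<in> Pts n r G t"
        have "dec n t b \<in> Msets n r G t" using dec_props[OF G t b] unfolding Msets_def by simp
        moreover have "b = Sm (dec n t b)" using dec_props[OF G t b] by simp
        ultimately show "b \<in> Sm ` Msets n r G t" by blast
      qed
    qed
  qed
  then show ?thesis by (simp add: bij_betw_same_card)
qed

lemma card_Msets:
  "card (Msets n r G t) = (\<Sum>F\<in>esd_restrict n r G. cnt (card F) t)"
proof -
  have eq: "Msets n r G t = (\<Union>F\<in>esd_restrict n r G. {M. set_mset M = F \<and> size M = t})"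
    unfolding Msets_def by auto
  have fin: "finite {M. set_mset M = F \<and> size M = t}" if "F \<in> esd_restrict n r G" for F
  proof (rule finite_subset)
    show "{M. set_mset M = F \<and> size M = t} \<subseteq> multisets_of_size F t"
      unfolding multisets_of_size_def by auto
    show "finite (multisets_of_size F t)" using face_finite[OF that] by blast
  qed
  have "card (Msets n r G t) = (\<Sum>F\<in>esd_restrict n r G. card {M. set_mset M = F \<and> size M = t})"
    unfolding eq by (rule card_UN_disjoint) (auto simp: finite_esd_restrict fin)
  also have "\<dots> = (\<Sum>F\<in>esd_restrict n r G. cnt (card F) t)"
    by (intro sum.cong refl) (simp add: card_set_size[OF face_finite] cnt_def)
  finally show ?thesis .
qed



definition AG :: "nat \<Rightarrow> nat \<Rightarrow> nat set \<Rightarrow> (nat \<Rightarrow> nat) set" where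
  "AG n r G = {a. (\<forall>j. j \<notin> G \<longrightarrow> a j = 0) \<and> (\<forall>j. a j < r) \<and> r dvd (\<Sum>j\<le>n. a j)}"

definition Cset :: "nat \<Rightarrow> nat set \<Rightarrow> nat \<Rightarrow> (nat \<Rightarrow> nat) set" where
  "Cset n G s = {c. (\<forall>j. j \<notin> G \<longrightarrow> c j = 0) \<and> (\<Sum>j\<le>n. c j) = s}"

lemma size_sum_count:
  assumes "finite A" "set_mset M \<subseteq> A"
  shows "size M = (\<Sum>x\<in>A. count M x)"
  using assms(2)
proof (induction M)
  case empty then show ?case by simp
next
  case (add x M)
  then have "x \<in> A" "set_mset M \<subseteq> A" by auto
  then have "(\<Sum>y\<in>A. count (add_mset x M) y) = (\<Sum>y\<in>A. count M y + (if y = x then 1 else 0))"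
    by (intro sum.cong) auto
  also have "\<dots> = (\<Sum>y\<in>A. count M y) + 1" using assms(1) \<open>x \<in> A\<close> by (simp add: sum.distrib)
  finally show ?case using add \<open>set_mset M \<subseteq> A\<close> by simp
qed

lemma card_Cset:
  assumes G: "G \<subseteq> {..n}"
  shows "card (Cset n G s) = (card G + s - 1) choose s"
proof -
  have fG: "finite G" using G finite_subset by blast
  have "bij_betw count (multisets_of_size G s) (Cset n G s)"
    unfolding bij_betw_def
  proof
    show "inj_on count (multisets_of_size G s)"
    proof (rule inj_onI)
      fix M M' :: "nat multiset" assume "count M = count M'"
      then show "M = M'" by (intro multiset_eqI) simp
    qed
    show "count ` multisets_of_size G s = Cset n G s"
    proof
      show "count ` multisets_of_size G s \<subseteq> Cset n G s"
      proof
        fix c assume "c \<in> count ` multisets_of_size G s"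
        then obtain M where M: "set_mset M \<subseteq> G" "size M = s" "c = count M"
          unfolding multisets_of_size_def by auto
        have "size M = (\<Sum>x\<in>{..n}. count M x)" using M G by (intro size_sum_count) auto
        moreover have "\<forall>j. j \<notin> G \<longrightarrow> count M j = 0"
        proof (intro allI impI)
          fix j assume "j \<notin> G"
          then have "j \<notin># M" using M(1) by blast
          then show "count M j = 0" by (simp add: not_in_iff)
        qed
        ultimately show "c \<in> Cset n G s" unfolding Cset_def using M by simp
      qed
      show "Cset n G s \<subseteq> count ` multisets_of_size G s"
      proof
        fix c assume c: "c \<in> Cset n G s"
        have fin: "finite {x. c x > 0}"
        proof (rule finite_subset[OF _ fG])
          show "{x. c x > 0} \<subseteq> G" using c unfolding Cset_def by auto
        qed
        define M where "M = Abs_multiset c"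
        have cM: "count M = c" unfolding M_def using count_Abs_multiset[OF fin] .
        have sub: "set_mset M \<subseteq> G"
        proof
          fix x assume "x \<in># M"
          then have "count M x > 0" by simp
          then have cx: "c x \<noteq> 0" using cM by simp
          have cz: "\<forall>j. j \<notin> G \<longrightarrow> c j = 0" using c unfolding Cset_def by simp
          show "x \<in> G"
          proof (rule ccontr)
            assume "x \<notin> G"
            then show False using cz cx by simp
          qed
        qed
        have "size M = (\<Sum>x\<in>{..n}. count M x)" using sub G by (intro size_sum_count) auto
        then have "size M = s" using c cM unfolding Cset_def by simp
        then have "M \<in> multisets_of_size G s" using sub unfolding multisets_of_size_def by simp
        then show "c \<in> count ` multisets_of_size G s" using cM by blast
      qed
    qed
  qed
  then have "card (Cset n G s) = card (multisets_of_size G s)" by (simp add: bij_betw_same_card)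
  then show ?thesis using card_multisets_of_size[OF fG] by simp
qed

definition wA :: "nat \<Rightarrow> nat \<Rightarrow> (nat \<Rightarrow> nat) \<Rightarrow> nat" where
  "wA n r a = (\<Sum>j\<le>n. a j) div r"

lemma finite_AG:
  assumes G: "G \<subseteq> {..n}"
  shows "finite (AG n r G)"
proof (rule finite_subset[OF _ finite_bounded_funs[of r n]])
  show "AG n r G \<subseteq> {f. (\<forall>j. f j \<le> r) \<and> (\<forall>j>n. f j = 0)}"
    using G unfolding AG_def by (auto simp: less_imp_le)
qed

lemma finite_Cset:
  assumes G: "G \<subseteq> {..n}"
  shows "finite (Cset n G s)"
proof (rule finite_subset[OF _ finite_bounded_funs[of s n]])
  show "Cset n G s \<subseteq> {f. (\<forall>j. f j \<le> s) \<and> (\<forall>j>n. f j = 0)}"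
  proof (clarify, intro conjI allI impI)
    fix f j assume f: "f \<in> Cset n G s"
    show "f j \<le> s"
    proof (cases "j \<le> n")
      case True
      have "f j \<le> (\<Sum>k\<le>n. f k)" by (rule member_le_sum) (use True in simp_all)
      then show ?thesis using f unfolding Cset_def by simp
    next
      case False then show ?thesis using f G unfolding Cset_def by auto
    qed
  next
    fix f j assume "f \<in> Cset n G s" "n < j"
    then show "f j = 0" using G unfolding Cset_def by auto
  qed
qed

lemma sum_mod_div:
  fixes b :: "nat \<Rightarrow> nat"
  shows "(\<Sum>j\<le>n. b j) = (\<Sum>j\<le>n. b j mod r) + r * (\<Sum>j\<le>n. b j div r)"
  by (simp add: sum_distrib_left sum.distrib[symmetric])

lemma card_Pts_A:
  assumes G: "G \<subseteq> {..n}" and r: "r > 0"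
  shows "card (Pts n r G t) = (\<Sum>a\<in>{a\<in>AG n r G. wA n r a \<le> t}. card (Cset n G (t - wA n r a)))"
proof -
  let ?S = "Sigma {a\<in>AG n r G. wA n r a \<le> t} (\<lambda>a. Cset n G (t - wA n r a))"
  have "bij_betw (\<lambda>b. (\<lambda>j. b j mod r, \<lambda>j. b j div r)) (Pts n r G t) ?S"
  proof (rule bij_betw_byWitness[where f'="\<lambda>(a, c). (\<lambda>j. a j + r * c j)"])
    show "\<forall>b\<in>Pts n r G t. (\<lambda>(a, c). (\<lambda>j. a j + r * c j)) (\<lambda>j. b j mod r, \<lambda>j. b j div r) = b"
      by simp
    show "\<forall>ac\<in>?S. (\<lambda>b. (\<lambda>j. b j mod r, \<lambda>j. b j div r)) ((\<lambda>(a, c). (\<lambda>j. a j + r * c j)) ac) = ac"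
      using r unfolding AG_def by auto
    show "(\<lambda>b. (\<lambda>j. b j mod r, \<lambda>j. b j div r)) ` Pts n r G t \<subseteq> ?S"
    proof (rule image_subsetI)
      fix b assume b: "b \<in> Pts n r G t"
      have bG: "\<forall>j. j \<notin> G \<longrightarrow> b j = 0" and bs: "(\<Sum>j\<le>n. b j) = t * r" using b unfolding Pts_def by auto
      have e: "t * r = (\<Sum>j\<le>n. b j mod r) + r * (\<Sum>j\<le>n. b j div r)" using bs sum_mod_div by metis
      have dv: "r dvd (\<Sum>j\<le>n. b j mod r)"
      proof -
        have "(\<Sum>j\<le>n. b j mod r) = r * t - r * (\<Sum>j\<le>n. b j div r)" using e by (simp add: mult.commute)
        also have "\<dots> = r * (t - (\<Sum>j\<le>n. b j div r))" by (simp add: diff_mult_distrib2)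
        finally show ?thesis by simp
      qed
      then obtain k where k: "(\<Sum>j\<le>n. b j mod r) = r * k" by blast
      have wk: "wA n r (\<lambda>j. b j mod r) = k" unfolding wA_def k using r by simp
      have "r * t = r * (k + (\<Sum>j\<le>n. b j div r))" using e k by (simp add: algebra_simps)
      then have kt: "t = k + (\<Sum>j\<le>n. b j div r)" using r by simp
      have "(\<lambda>j. b j mod r) \<in> AG n r G" unfolding AG_def using bG dv r by auto
      moreover have "wA n r (\<lambda>j. b j mod r) \<le> t" using wk kt by simp
      moreover have "(\<lambda>j. b j div r) \<in> Cset n G (t - wA n r (\<lambda>j. b j mod r))"
        unfolding Cset_def using bG wk kt by auto
      ultimately show "(\<lambda>j. b j mod r, \<lambda>j. b j div r) \<in> ?S" by simp
    qed
    show "(\<lambda>(a, c). (\<lambda>j. a j + r * c j)) ` ?S \<subseteq> Pts n r G t"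
    proof (rule image_subsetI)
      fix ac assume "ac \<in> ?S"
      then obtain a c where ac: "ac = (a, c)" and a: "a \<in> AG n r G" "wA n r a \<le> t"
        and c: "c \<in> Cset n G (t - wA n r a)" by auto
      have dv: "r dvd (\<Sum>j\<le>n. a j)" using a unfolding AG_def by simp
      then obtain k where k: "(\<Sum>j\<le>n. a j) = r * k" by blast
      have wk: "wA n r a = k" unfolding wA_def k using r by simp
      have "(\<Sum>j\<le>n. a j + r * c j) = r * k + r * (t - k)"
        using c k wk by (simp add: sum.distrib sum_distrib_left[symmetric] Cset_def)
      also have "\<dots> = t * r" using a(2) wk by (simp add: algebra_simps diff_mult_distrib2)
      finally have "(\<Sum>j\<le>n. a j + r * c j) = t * r" .
      moreover have "\<forall>j. j \<notin> G \<longrightarrow> a j + r * c j = 0" using a c unfolding AG_def Cset_def by simp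
      ultimately show "(\<lambda>(a, c). (\<lambda>j. a j + r * c j)) ac \<in> Pts n r G t" unfolding Pts_def ac by simp
    qed
  qed
  then have "card (Pts n r G t) = card ?S" by (rule bij_betw_same_card)
  also have "\<dots> = (\<Sum>a\<in>{a\<in>AG n r G. wA n r a \<le> t}. card (Cset n G (t - wA n r a)))"
    using finite_AG[OF G] finite_Cset[OF G] by (intro card_SigmaI) auto
  finally show ?thesis .
qed



lemma restrict_vertex:
  assumes "F \<in> esd_restrict n r G" "v \<in> F"
  shows "v \<in> esd_vertices n r" "\<And>j. j \<notin> G \<Longrightarrow> v j = 0"
  using assms unfolding esd_restrict_def esd_faces_def supp_carrier_def by auto

lemma psum_agree_G:
  assumes vG: "\<And>j. j \<notin> G \<Longrightarrow> v j = 0" and wG: "\<And>j. j \<notin> G \<Longrightarrow> w j = 0"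
    and eq: "\<forall>g\<in>G. psum v g = psum w g"
  shows "psum v j = psum w j"
proof (induction j)
  case 0 then show ?case using eq vG[of 0] wG[of 0] by (cases "0 \<in> G") (auto simp: psum_0)
next
  case (Suc j) then show ?case using eq vG[of "Suc j"] wG[of "Suc j"]
    by (cases "Suc j \<in> G") (auto simp: psum_Suc)
qed

lemma psum_MaxG:
  assumes G: "G \<subseteq> {..n}" "G \<noteq> {}" and v: "v \<in> esd_vertices n r" and vG: "\<And>j. j \<notin> G \<Longrightarrow> v j = 0"
  shows "psum v (Max G) = r"
proof -
  have fG: "finite G" using G finite_subset by blast
  have mx: "Max G \<le> n" using G fG by auto
  have "psum v (Max G) = (\<Sum>k\<le>n. v k)" unfolding psum_def
  proof (rule sum.mono_neutral_left)
    show "\<forall>i\<in>{..n} - {..Max G}. v i = 0"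
    proof
      fix i assume "i \<in> {..n} - {..Max G}"
      then have "i > Max G" by auto
      then have "i \<notin> G" using fG Max_ge leD by blast
      then show "v i = 0" by (rule vG)
    qed
  qed (use mx in auto)
  then show ?thesis using v unfolding esd_vertices_def by simp
qed

lemma face_card_bound:
  assumes G: "G \<subseteq> {..n}" and r: "r > 0" and F: "F \<in> esd_restrict n r G"
  shows "card F \<le> card G"
proof (cases "F = {}")
  case True then show ?thesis by simp
next
  case False
  have fF: "finite F" using face_finite[OF F] .
  have fG: "finite G" using G finite_subset by blast
  obtain v0 where v0: "v0 \<in> F" using False by blast
  have Gne: "G \<noteq> {}"
  proof
    assume "G = {}"
    then have "\<forall>j. v0 j = 0" using restrict_vertex(2)[OF F v0] by blast
    then show False using restrict_vertex(1)[OF F v0] r unfolding esd_vertices_def by simp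
  qed
  have Ff: "set_mset (mset_set F) \<in> esd_faces n r" using fF restrict_face[OF F] by simp
  obtain l where l: "mset l = mset_set F" and ch: "\<forall>i i'. i \<le> i' \<longrightarrow> i' < length l \<longrightarrow> le1 n (l ! i) (l ! i')"
    using chain_sort[OF Ff] by blast
  define t where "t = length l"
  have tF: "t = card F" unfolding t_def using l by (metis size_mset size_mset_set)
  have t0: "t > 0" using tF fF False by (simp add: card_gt_0_iff)
  have setl: "set l = F"
  proof -
    have "set l = set_mset (mset l)" by simp
    also have "\<dots> = F" using l fF by simp
    finally show ?thesis .
  qed
  have dist: "distinct l"
    unfolding distinct_count_atmost_1 l setl using fF by (auto simp: count_mset_set')
  have inF: "l ! i \<in> F" if "i < t" for i using that setl unfolding t_def by auto
  define key where "key = (\<lambda>v. \<Sum>g\<in>G. psum v g)"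
  have step: "key (l ! i) + 1 \<le> key (l ! Suc i)" if i: "Suc i < t" for i
  proof -
    have le: "le1 n (l ! i) (l ! Suc i)" using ch i unfolding t_def by auto
    have mono: "\<forall>g\<in>G. psum (l ! i) g \<le> psum (l ! Suc i) g" using le G unfolding le1_def by auto
    have "\<exists>g\<in>G. psum (l ! i) g < psum (l ! Suc i) g"
    proof (rule ccontr)
      assume "\<not> ?thesis"
      then have eqG: "\<forall>g\<in>G. psum (l ! i) g = psum (l ! Suc i) g" using mono by force
      have vi: "l ! i \<in> F" "l ! Suc i \<in> F" using inF i by auto
      have "l ! i = l ! Suc i"
      proof (rule psum_determines[of n])
        show "\<forall>j>n. (l ! i) j = 0" "\<forall>j>n. (l ! Suc i) j = 0"
          using restrict_vertex(1)[OF F vi(1)] restrict_vertex(1)[OF F vi(2)]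
          unfolding esd_vertices_def by auto
        show "\<forall>j\<le>n. psum (l ! i) j = psum (l ! Suc i) j"
          using psum_agree_G[OF restrict_vertex(2)[OF F vi(1)] restrict_vertex(2)[OF F vi(2)] eqG] by blast
      qed
      moreover have "i \<noteq> Suc i" by simp
      ultimately show False using dist i unfolding t_def by (simp add: nth_eq_iff_index_eq)
    qed
    then have "key (l ! i) < key (l ! Suc i)" unfolding key_def
      using fG mono by (intro sum_strict_mono_ex1) auto
    then show ?thesis by simp
  qed
  have lower: "key (l ! 0) + i \<le> key (l ! i)" if "i < t" for i
    using that
  proof (induction i)
    case 0 then show ?case by simp
  next
    case (Suc i) then show ?case using step[of i] by simp
  qed
  have upper: "key (l ! (t - 1)) \<le> key (l ! 0) + (card G - 1)"
  proof -
    have le: "le1 n (l ! 0) (l ! (t - 1))" using ch t0 unfolding t_def by auto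
    have last: "l ! (t - 1) \<in> F" and first: "l ! 0 \<in> F" using inF t0 by auto
    have mG: "Max G \<in> G" using fG Gne by simp
    have "key (l ! (t - 1)) = psum (l ! (t - 1)) (Max G) + (\<Sum>g\<in>G - {Max G}. psum (l ! (t - 1)) g)"
      unfolding key_def using fG mG by (simp add: sum.remove)
    also have "\<dots> \<le> psum (l ! 0) (Max G) + (\<Sum>g\<in>G - {Max G}. psum (l ! 0) g + 1)"
    proof (rule add_mono)
      show "psum (l ! (t - 1)) (Max G) \<le> psum (l ! 0) (Max G)"
        using psum_MaxG[OF G Gne restrict_vertex[OF F last]] psum_MaxG[OF G Gne restrict_vertex[OF F first]]
        by simp
      show "(\<Sum>g\<in>G - {Max G}. psum (l ! (t - 1)) g) \<le> (\<Sum>g\<in>G - {Max G}. psum (l ! 0) g + 1)"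
        using le G unfolding le1_def by (intro sum_mono) auto
    qed
    also have "\<dots> = key (l ! 0) + (card G - 1)"
    proof -
      have "(\<Sum>g\<in>G - {Max G}. psum (l ! 0) g + 1) = (\<Sum>g\<in>G - {Max G}. psum (l ! 0) g) + card (G - {Max G})"
        by (simp only: sum.distrib) simp
      moreover have "card (G - {Max G}) = card G - 1" using fG mG by simp
      moreover have "key (l ! 0) = psum (l ! 0) (Max G) + (\<Sum>g\<in>G - {Max G}. psum (l ! 0) g)"
        unfolding key_def using fG mG by (simp add: sum.remove)
      ultimately show ?thesis by simp
    qed
    finally show ?thesis .
  qed
  have "key (l ! 0) + (t - 1) \<le> key (l ! 0) + (card G - 1)"
    using lower[of "t - 1"] upper t0 by simp
  moreover have "card G > 0" using fG Gne by (simp add: card_gt_0_iff)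
  ultimately show ?thesis using tF t0 by linarith
qed


unbundle fps_syntax

definition Efps :: "nat \<Rightarrow> int fps" where
  "Efps k = Abs_fps (\<lambda>s. of_nat ((k + s - 1) choose s))"

lemma Efps_step: "(1 - fps_X) * Efps (Suc k) = Efps k"
proof (rule fps_ext)
  fix s
  show "((1 - fps_X) * Efps (Suc k)) $ s = Efps k $ s"
  proof (cases s)
    case 0 then show ?thesis by (simp add: Efps_def algebra_simps)
  next
    case (Suc s')
    have "((1 - fps_X) * Efps (Suc k)) $ s = Efps (Suc k) $ s - Efps (Suc k) $ s'"
      using Suc by (simp add: algebra_simps)
    also have "\<dots> = int ((k + Suc s') choose (Suc s')) - int ((k + s') choose s')"
      using Suc by (simp add: Efps_def)
    also have "((k + Suc s') choose (Suc s')) = ((k + s') choose s') + ((k + s') choose (Suc s'))"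
      by simp
    finally show ?thesis using Suc by (simp add: Efps_def)
  qed
qed

lemma Efps_inv: "(1 - fps_X) ^ k * Efps k = 1"
proof (induction k)
  case 0
  show ?case by (rule fps_ext) (simp add: Efps_def)
next
  case (Suc k)
  have "(1 - fps_X) ^ Suc k * Efps (Suc k) = (1 - fps_X) ^ k * ((1 - fps_X) * Efps (Suc k))"
    by (simp add: algebra_simps)
  also have "\<dots> = 1" using Suc by (simp add: Efps_step)
  finally show ?case .
qed

lemma XE_nth: "(fps_X ^ k * Efps k) $ t = int (cnt k t)"
  by (simp add: fps_X_power_mult_nth Efps_def cnt_def)

lemma fps_one_minus_X: "fps_of_poly [:1, -1:] = (1 - fps_X :: int fps)"
  by (rule fps_ext) (simp add: coeff_pCons split: nat.split)

lemma h_poly_faces: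
  assumes fin: "finite \<Omega>" and bd: "\<forall>F\<in>\<Omega>. card F \<le> d"
  shows "h_poly d \<Omega> = (\<Sum>F\<in>\<Omega>. monom 1 (card F) * [:1, -1:] ^ (d - card F))"
proof -
  have "h_poly d \<Omega> = (\<Sum>i\<le>d. \<Sum>F\<in>{F\<in>\<Omega>. card F = i}. monom 1 i * [:1, -1:] ^ (d - i))"
    unfolding h_poly_def by (simp add: mult.assoc)
  also have "\<dots> = (\<Sum>i\<le>d. \<Sum>F\<in>{F\<in>\<Omega>. card F = i}. monom 1 (card F) * [:1, -1:] ^ (d - card F))"
    by (intro sum.cong refl) auto
  also have "\<dots> = (\<Sum>F\<in>\<Omega>. monom 1 (card F) * [:1, -1:] ^ (d - card F))"
  proof (rule sum.group[OF fin finite_atMost])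
    show "card ` \<Omega> \<subseteq> {..d}" using bd by auto
  qed
  finally show ?thesis .
qed

definition Apoly :: "nat \<Rightarrow> nat \<Rightarrow> nat set \<Rightarrow> int poly" where
  "Apoly n r G = (\<Sum>a\<in>AG n r G. monom 1 (wA n r a))"

lemma Pts_fps_faces:
  assumes G: "G \<subseteq> {..n}"
  shows "Abs_fps (\<lambda>t. int (card (Pts n r G t))) = (\<Sum>F\<in>esd_restrict n r G. fps_X ^ card F * Efps (card F))"
proof (rule fps_ext)
  fix t
  show "Abs_fps (\<lambda>t. int (card (Pts n r G t))) $ t = (\<Sum>F\<in>esd_restrict n r G. fps_X ^ card F * Efps (card F)) $ t"
    by (simp add: fps_sum_nth XE_nth card_Pts_Msets[OF G] card_Msets)
qed

lemma Pts_fps_A: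
  assumes G: "G \<subseteq> {..n}" and r: "r > 0"
  shows "Abs_fps (\<lambda>t. int (card (Pts n r G t))) = fps_of_poly (Apoly n r G) * Efps (card G)"
proof (rule fps_ext)
  fix t
  let ?E = "\<lambda>s. int ((card G + s - 1) choose s)"
  have "(fps_of_poly (Apoly n r G) * Efps (card G)) $ t
      = (\<Sum>i=0..t. coeff (Apoly n r G) i * ?E (t - i))"
    by (simp add: fps_mult_nth Efps_def)
  also have "\<dots> = (\<Sum>i=0..t. \<Sum>a\<in>AG n r G. (if wA n r a = i then 1 else 0) * ?E (t - i))"
    unfolding Apoly_def by (simp add: coeff_sum coeff_monom sum_distrib_right)
  also have "\<dots> = (\<Sum>a\<in>AG n r G. \<Sum>i=0..t. (if wA n r a = i then 1 else 0) * ?E (t - i))"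
    by (rule sum.swap)
  also have "\<dots> = (\<Sum>a\<in>AG n r G. if wA n r a \<le> t then ?E (t - wA n r a) else 0)"
  proof (intro sum.cong refl)
    fix a
    have "(\<Sum>i=0..t. (if wA n r a = i then 1 else 0) * ?E (t - i)) = (\<Sum>i\<in>{0..t}. if i = wA n r a then ?E (t - i) else 0)"
      by (intro sum.cong) auto
    also have "\<dots> = (if wA n r a \<le> t then ?E (t - wA n r a) else 0)"
      by (subst sum.delta) auto
    finally show "(\<Sum>i=0..t. (if wA n r a = i then 1 else 0) * ?E (t - i)) = (if wA n r a \<le> t then ?E (t - wA n r a) else 0)" .
  qed
  also have "\<dots> = (\<Sum>a\<in>{a\<in>AG n r G. wA n r a \<le> t}. ?E (t - wA n r a))"
    by (rule sum.inter_filter[symmetric, OF finite_AG[OF G]])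
  also have "\<dots> = int (card (Pts n r G t))"
    unfolding card_Pts_A[OF G r] by (simp add: card_Cset[OF G])
  finally show "Abs_fps (\<lambda>t. int (card (Pts n r G t))) $ t = (fps_of_poly (Apoly n r G) * Efps (card G)) $ t"
    by simp
qed

lemma h_restrict:
  assumes G: "G \<subseteq> {..n}" and r: "r > 0"
  shows "h_poly (card G) (esd_restrict n r G) = Apoly n r G"
proof -
  let ?\<Omega> = "esd_restrict n r G"
  let ?d = "card G"
  let ?N = "Abs_fps (\<lambda>t. int (card (Pts n r G t)))"
  have bd: "\<forall>F\<in>?\<Omega>. card F \<le> ?d" using face_card_bound[OF G r] by blast
  have "fps_of_poly (h_poly ?d ?\<Omega>) = (\<Sum>F\<in>?\<Omega>. fps_X ^ card F * (1 - fps_X) ^ (?d - card F))"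
    unfolding h_poly_faces[OF finite_esd_restrict bd]
    by (simp add: fps_of_poly_sum fps_of_poly_mult fps_of_poly_power fps_of_poly_monom' fps_one_minus_X)
  also have "\<dots> = (\<Sum>F\<in>?\<Omega>. (1 - fps_X) ^ ?d * (fps_X ^ card F * Efps (card F)))"
  proof (intro sum.cong refl)
    fix F assume F: "F \<in> ?\<Omega>"
    have "(1 - fps_X :: int fps) ^ ?d = (1 - fps_X) ^ (?d - card F) * (1 - fps_X) ^ card F"
      using bd F by (simp flip: power_add)
    then have "(1 - fps_X) ^ ?d * (fps_X ^ card F * Efps (card F))
        = fps_X ^ card F * (1 - fps_X) ^ (?d - card F) * ((1 - fps_X) ^ card F * Efps (card F))"
      by (simp add: algebra_simps)
    then show "fps_X ^ card F * (1 - fps_X) ^ (?d - card F) = (1 - fps_X) ^ ?d * (fps_X ^ card F * Efps (card F))"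
      by (simp add: Efps_inv)
  qed
  also have "\<dots> = (1 - fps_X) ^ ?d * ?N"
    by (simp add: Pts_fps_faces[OF G] sum_distrib_left)
  also have "\<dots> = fps_of_poly (Apoly n r G) * ((1 - fps_X) ^ ?d * Efps ?d)"
    by (simp add: Pts_fps_A[OF G r] algebra_simps)
  also have "\<dots> = fps_of_poly (Apoly n r G)" by (simp add: Efps_inv)
  finally show ?thesis by (simp add: fps_of_poly_eq_iff)
qed



lemma alt_sum:
  assumes "finite U"
  shows "(\<Sum>H\<in>Pow U. (-1::'a::comm_ring_1) ^ (card U - card H)) = (if U = {} then 1 else 0)"
  using assms
proof (induction U rule: finite_induct)
  case empty then show ?case by simp
next
  case (insert x U)
  have fP: "finite (Pow U)" "finite (insert x ` Pow U)" using insert by auto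
  have disj: "Pow U \<inter> insert x ` Pow U = {}" using insert by auto
  have cardH: "card H \<le> card U" if "H \<in> Pow U" for H using that insert card_mono by blast
  have "(\<Sum>H\<in>Pow (insert x U). (-1::'a) ^ (card (insert x U) - card H))
      = (\<Sum>H\<in>Pow U. (-1::'a) ^ (card (insert x U) - card H)) + (\<Sum>H\<in>insert x ` Pow U. (-1::'a) ^ (card (insert x U) - card H))"
    unfolding Pow_insert by (rule sum.union_disjoint[OF fP disj])
  also have "(\<Sum>H\<in>insert x ` Pow U. (-1::'a) ^ (card (insert x U) - card H)) = (\<Sum>H\<in>Pow U. (-1::'a) ^ (card (insert x U) - card (insert x H)))"
  proof (rule sum.reindex_cong[where l="insert x"])
    show "inj_on (insert x) (Pow U)" using insert by (auto simp: inj_on_def)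
  qed auto
  also have "(\<Sum>H\<in>Pow U. (-1::'a) ^ (card (insert x U) - card (insert x H))) = (\<Sum>H\<in>Pow U. (-1::'a) ^ (card U - card H))"
  proof (intro sum.cong refl)
    fix H assume H: "H \<in> Pow U"
    have "finite H" "x \<notin> H" using H insert finite_subset by auto
    then show "(-1::'a) ^ (card (insert x U) - card (insert x H)) = (-1) ^ (card U - card H)"
      using insert by simp
  qed
  also have "(\<Sum>H\<in>Pow U. (-1::'a) ^ (card (insert x U) - card H)) = - (\<Sum>H\<in>Pow U. (-1::'a) ^ (card U - card H))"
  proof -
    have "(\<Sum>H\<in>Pow U. (-1::'a) ^ (card (insert x U) - card H)) = (\<Sum>H\<in>Pow U. - ((-1::'a) ^ (card U - card H)))"
    proof (intro sum.cong refl)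
      fix H assume H: "H \<in> Pow U"
      have "card (insert x U) - card H = Suc (card U - card H)" using cardH[OF H] insert by simp
      then show "(-1::'a) ^ (card (insert x U) - card H) = - ((-1) ^ (card U - card H))" by simp
    qed
    then show ?thesis by (simp add: sum_negf)
  qed
  finally show ?case by simp
qed

lemma incl_excl:
  assumes V: "finite V" and S: "S \<subseteq> V"
  shows "(\<Sum>G\<in>Pow V. if S \<subseteq> G then (-1::'a::comm_ring_1) ^ (card V - card G) else 0) = (if S = V then 1 else 0)"
proof -
  have fS: "finite S" using V S finite_subset by blast
  have "(\<Sum>G\<in>Pow V. if S \<subseteq> G then (-1::'a) ^ (card V - card G) else 0)
      = (\<Sum>G\<in>{G\<in>Pow V. S \<subseteq> G}. (-1::'a) ^ (card V - card G))"
    by (rule sum.inter_filter[symmetric]) (use V in simp)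
  also have "\<dots> = (\<Sum>H\<in>Pow (V - S). (-1::'a) ^ (card V - card (S \<union> H)))"
  proof (rule sum.reindex_bij_witness[where j="\<lambda>G. G - S" and i="\<lambda>H. S \<union> H"])
  qed (use S in \<open>auto simp: sup.absorb2\<close>)
  also have "\<dots> = (\<Sum>H\<in>Pow (V - S). (-1::'a) ^ (card (V - S) - card H))"
  proof (intro sum.cong refl)
    fix H assume H: "H \<in> Pow (V - S)"
    have fH: "finite H" using H V finite_subset by auto
    have "card (S \<union> H) = card S + card H" using H fS fH by (intro card_Un_disjoint) auto
    moreover have "card (V - S) = card V - card S" using S fS by (simp add: card_Diff_subset)
    moreover have "card S \<le> card V" using S V card_mono by blast
    ultimately show "(-1::'a) ^ (card V - card (S \<union> H)) = (-1) ^ (card (V - S) - card H)" by simp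
  qed
  also have "\<dots> = (if V - S = {} then 1 else 0)" using V by (intro alt_sum) simp
  finally show ?thesis using S by auto
qed


lemma AG_sub:
  assumes "G \<subseteq> {..n}"
  shows "AG n r G = {a\<in>AG n r {..n}. {j. a j \<noteq> 0} \<subseteq> G}"
  using assms unfolding AG_def by auto

lemma Aset_AG: "Aset n r = {a\<in>AG n r {..n}. {j. a j \<noteq> 0} = {..n}}"
proof (intro set_eqI iffI)
  fix a assume a: "a \<in> Aset n r"
  have r: "r > 0" using a by (rule Aset_r)
  have az: "\<forall>j>n. a j = 0" and ap: "\<forall>j\<le>n. 0 < a j \<and> a j < r" and dv: "r dvd (\<Sum>j\<le>n. a j)"
    using a unfolding Aset_def by blast+
  have s: "{j. a j \<noteq> 0} = {..n}"
  proof (intro set_eqI iffI)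
    fix j assume "j \<in> {j. a j \<noteq> 0}"
    then have "a j \<noteq> 0" by simp
    then show "j \<in> {..n}" using az by (meson atMost_iff not_le)
  next
    fix j assume "j \<in> {..n}"
    then show "j \<in> {j. a j \<noteq> 0}" using ap by simp
  qed
  have lt: "\<forall>j. a j < r"
  proof
    fix j show "a j < r" using az ap r by (cases "j \<le> n") auto
  qed
  have "a \<in> AG n r {..n}" unfolding AG_def using az lt dv by simp
  then show "a \<in> {a \<in> AG n r {..n}. {j. a j \<noteq> 0} = {..n}}" using s by simp
next
  fix a assume a: "a \<in> {a \<in> AG n r {..n}. {j. a j \<noteq> 0} = {..n}}"
  then have aA: "a \<in> AG n r {..n}" and s: "{j. a j \<noteq> 0} = {..n}" by simp_all
  have z: "\<forall>j. j \<notin> {..n} \<longrightarrow> a j = 0" and lt: "\<forall>j. a j < r" and dv: "r dvd (\<Sum>j\<le>n. a j)"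
    using aA unfolding AG_def by blast+
  have "\<forall>j\<le>n. a j \<noteq> 0"
  proof (intro allI impI)
    fix j assume "j \<le> n"
    then have "j \<in> {j. a j \<noteq> 0}" using s by simp
    then show "a j \<noteq> 0" by simp
  qed
  moreover have "\<forall>j>n. a j = 0" using z by simp
  ultimately show "a \<in> Aset n r" unfolding Aset_def using lt dv by simp
qed

lemma esd_local_h_Aset:
  assumes r: "r > 0"
  shows "esd_local_h n r = (\<Sum>a\<in>Aset n r. (monom 1 ((\<Sum>j\<le>n. a j) div r) :: int poly))"
proof -
  let ?V = "{..n} :: nat set"
  let ?A = "AG n r ?V"
  let ?m = "\<lambda>a. (monom 1 (wA n r a) :: int poly)"
  have V: "{0..n} = ?V" by auto
  have fA: "finite ?A" using finite_AG[of ?V n r] by simp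
  have "esd_local_h n r = (\<Sum>G\<in>Pow ?V. (-1) ^ (card ?V - card G) * Apoly n r G)"
    unfolding esd_local_h_def local_h_def V
    by (intro sum.cong refl) (simp add: h_restrict[OF _ r])
  also have "\<dots> = (\<Sum>G\<in>Pow ?V. (-1) ^ (card ?V - card G) * (\<Sum>a\<in>?A. if {j. a j \<noteq> 0} \<subseteq> G then ?m a else 0))"
  proof (intro sum.cong refl)
    fix G assume G: "G \<in> Pow ?V"
    have "Apoly n r G = (\<Sum>a\<in>{a\<in>?A. {j. a j \<noteq> 0} \<subseteq> G}. ?m a)"
      unfolding Apoly_def using AG_sub[of G n r] G by simp
    also have "\<dots> = (\<Sum>a\<in>?A. if {j. a j \<noteq> 0} \<subseteq> G then ?m a else 0)"
      by (rule sum.inter_filter[OF fA])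
    finally show "(-1) ^ (card ?V - card G) * Apoly n r G = (-1) ^ (card ?V - card G) * (\<Sum>a\<in>?A. if {j. a j \<noteq> 0} \<subseteq> G then ?m a else 0)"
      by simp
  qed
  also have "\<dots> = (\<Sum>G\<in>Pow ?V. \<Sum>a\<in>?A. ?m a * (if {j. a j \<noteq> 0} \<subseteq> G then (-1) ^ (card ?V - card G) else 0))"
  proof (intro sum.cong refl)
    fix G
    show "(-1) ^ (card ?V - card G) * (\<Sum>a\<in>?A. if {j. a j \<noteq> 0} \<subseteq> G then ?m a else 0) =
          (\<Sum>a\<in>?A. ?m a * (if {j. a j \<noteq> 0} \<subseteq> G then (-1) ^ (card ?V - card G) else 0))"
      unfolding sum_distrib_left by (intro sum.cong refl) (simp add: mult.commute)
  qed
  also have "\<dots> = (\<Sum>a\<in>?A. ?m a * (\<Sum>G\<in>Pow ?V. if {j. a j \<noteq> 0} \<subseteq> G then (-1) ^ (card ?V - card G) else 0))"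
    by (subst sum.swap) (simp add: sum_distrib_left)
  also have "\<dots> = (\<Sum>a\<in>?A. ?m a * (if {j. a j \<noteq> 0} = ?V then 1 else 0))"
  proof (intro sum.cong refl)
    fix a assume a: "a \<in> ?A"
    have "{j. a j \<noteq> 0} \<subseteq> ?V" using a unfolding AG_def by auto
    then show "?m a * (\<Sum>G\<in>Pow ?V. if {j. a j \<noteq> 0} \<subseteq> G then (-1) ^ (card ?V - card G) else 0) =
               ?m a * (if {j. a j \<noteq> 0} = ?V then 1 else 0)"
      by (simp only: incl_excl[OF finite_atMost])
  qed
  also have "\<dots> = (\<Sum>a\<in>?A. if {j. a j \<noteq> 0} = ?V then ?m a else 0)"
    by (intro sum.cong refl) simp
  also have "\<dots> = (\<Sum>a\<in>{a\<in>?A. {j. a j \<noteq> 0} = ?V}. ?m a)"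
    by (rule sum.inter_filter[OF fA, symmetric])
  also have "\<dots> = (\<Sum>a\<in>Aset n r. ?m a)" by (simp add: Aset_AG)
  finally show ?thesis by (simp add: wA_def)
qed


theorem theorem4p4:
  fixes n r :: nat
  assumes "r \<ge> 1" and "n \<ge> 1"
  shows "lecture_hall_d n (\<lambda>_. r) = (\<Sum>w\<in>smirnoff_words (Suc n) r. monom 1 (des w))
         \<and> esd_local_h n r = lecture_hall_d n (\<lambda>_. r)"
proof -
  have r: "r > 0" using assms(1) by simp
  have L: "lecture_hall_d n (\<lambda>_. r) = (\<Sum>a\<in>Aset n r. (monom 1 ((\<Sum>j\<le>n. a j) div r) :: int poly))"
    by (rule lecture_hall_Aset[OF r assms(2)])
  have S: "(\<Sum>w\<in>smirnoff_words (Suc n) r. monom 1 (des w)) =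
           (\<Sum>a\<in>Aset n r. (monom 1 ((\<Sum>j\<le>n. a j) div r) :: int poly))"
    by (rule SW_sum_Aset)
  have E: "esd_local_h n r = (\<Sum>a\<in>Aset n r. (monom 1 ((\<Sum>j\<le>n. a j) div r) :: int poly))"
    by (rule esd_local_h_Aset[OF r])
  show ?thesis using L S E by simp
qed

end
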